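(* Let $K$ be a real algebraic number field (a subfield of $\mathbb{R}$ of finite degree over $\mathbb{Q}$). Let $\wp_K$ be the set of Pisot numbers $\theta\in K$ with $\mathbb{Q}(\theta)=K$, listed increasingly as $\theta_1<\theta_2<\theta_3<\cdots$. Let $$D_K:=\{\theta_n-\theta_m \mid (m,n)\in\mathbb{N}^2,\ n>m\}=\{\alpha-\alpha' \mid \alpha,\alpha'\in\wp_K,\ \alpha>\alpha'\},\qquad \mathcal{F}_K:=\{\theta_{n+1}-\theta_n\mid n\in\mathbb{N}\}.$$ Then: (i) $1\in D_K$; (ii) $\wp_K\subsetneq D_K$; (iii) if $K\neq\mathbb{Q}$, then the set $D_K\setminus\wp_K$ is infinite, and $\mathcal{F}_K$ has at least two elements.
   Context: A Pisot number is a real algebraic integer greater than $1$ all of whose other conjugates (over $\mathbb{Q}$) have modulus less than $1$. The set $\wp_K$ is infinite and discrete in $[1,\infty)$, so it can be enumerated increasingly. Note $\wp_K-\wp_K=(-D_K)\cup\{0\}\cup D_K$. *)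

theory Defs
  imports "HOL-Computational_Algebra.Polynomial" Complex_Main
begin

definition real_subfield :: "real set \<Rightarrow> bool" where
  "real_subfield K \<longleftrightarrow> 0 \<in> K \<and> 1 \<in> K \<and>
     (\<forall>x\<in>K. \<forall>y\<in>K. x + y \<in> K \<and> x * y \<in> K) \<and>
     (\<forall>x\<in>K. - x \<in> K) \<and> (\<forall>x\<in>K. x \<noteq> 0 \<longrightarrow> inverse x \<in> K)"

definition real_number_field :: "real set \<Rightarrow> bool" where
  "real_number_field K \<longleftrightarrow> real_subfield K \<and>
     (\<exists>B. finite B \<and> B \<subseteq> K \<and>
        (\<forall>x\<in>K. \<exists>c :: real \<Rightarrow> rat. x = (\<Sum>b\<in>B. of_rat (c b) * b)))"

definition gen_field :: "real \<Rightarrow> real set" where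
  "gen_field \<theta> = \<Inter> {F. real_subfield F \<and> \<theta> \<in> F}"

definition pisot :: "real \<Rightarrow> bool" where
  "pisot \<theta> \<longleftrightarrow> \<theta> > 1 \<and>
     (\<exists>p :: int poly. lead_coeff p = 1 \<and> irreducible p \<and>
        poly (map_poly (of_int :: int \<Rightarrow> real) p) \<theta> = 0 \<and>
        (\<forall>z :: complex. poly (map_poly (of_int :: int \<Rightarrow> complex) p) z = 0 \<and> z \<noteq> complex_of_real \<theta> \<longrightarrow> cmod z < 1))"

definition pisot_set :: "real set \<Rightarrow> real set" where
  "pisot_set K = {\<theta> \<in> K. pisot \<theta> \<and> gen_field \<theta> = K}"

definition diff_set :: "real set \<Rightarrow> real set" where
  "diff_set K = {\<alpha> - \<alpha>' | \<alpha> \<alpha>'. \<alpha> \<in> pisot_set K \<and> \<alpha>' \<in> pisot_set K \<and> \<alpha> > \<alpha>'}"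

text \<open>F_K: differences theta_(n+1) - theta_n of consecutive elements of wp_K
  (in its increasing enumeration).\<close>
definition gap_set :: "real set \<Rightarrow> real set" where
  "gap_set K = {\<beta> - \<alpha> | \<alpha> \<beta>. \<alpha> \<in> pisot_set K \<and> \<beta> \<in> pisot_set K \<and> \<alpha> < \<beta> \<and>
                  \<not> (\<exists>\<gamma>\<in>pisot_set K. \<alpha> < \<gamma> \<and> \<gamma> < \<beta>)}"

end

theory Submission imports Defs "Berlekamp_Zassenhaus.Factor_Bound" "Jordan_Normal_Form.Char_Poly" begin


lemma rsf_basic:
  assumes "real_subfield F"
  shows "0 \<in> F" "1 \<in> F" "x \<in> F \<Longrightarrow> y \<in> F \<Longrightarrow> x + y \<in> F"
    "x \<in> F \<Longrightarrow> y \<in> F \<Longrightarrow> x * y \<in> F" "x \<in> F \<Longrightarrow> - x \<in> F"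
    "x \<in> F \<Longrightarrow> inverse x \<in> F"
  using assms unfolding real_subfield_def by (auto simp: inverse_eq_divide)

lemma rsf_diff: "real_subfield F \<Longrightarrow> x \<in> F \<Longrightarrow> y \<in> F \<Longrightarrow> x - y \<in> F"
  using rsf_basic[of F] by (metis diff_conv_add_uminus)

lemma rsf_divide: "real_subfield F \<Longrightarrow> x \<in> F \<Longrightarrow> y \<in> F \<Longrightarrow> x / y \<in> F"
  using rsf_basic[of F] by (metis divide_inverse)

lemma rsf_of_nat: "real_subfield F \<Longrightarrow> real n \<in> F"
  by (induction n) (auto intro: rsf_basic)

lemma rsf_of_int: "real_subfield F \<Longrightarrow> real_of_int n \<in> F"
proof (cases "n \<ge> 0")
  case True
  assume F: "real_subfield F"
  then show ?thesis using True rsf_of_nat[OF F, of "nat n"] by simp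
next
  case False
  assume F: "real_subfield F"
  then show ?thesis using False rsf_of_nat[OF F, of "nat (-n)"] rsf_basic(5)[OF F] by force
qed

lemma rsf_of_rat: "real_subfield F \<Longrightarrow> of_rat r \<in> F"
proof -
  assume F: "real_subfield F"
  obtain a b where r: "r = Rat.Fract a b" by (cases r) auto
  have "of_rat r = real_of_int a / real_of_int b" unfolding r by (simp add: Fract_of_int_quotient of_rat_divide)
  then show ?thesis using rsf_divide[OF F rsf_of_int[OF F] rsf_of_int[OF F]] by simp
qed

lemma rsf_Rats: "real_subfield F \<Longrightarrow> x \<in> \<rat> \<Longrightarrow> x \<in> F"
  by (auto elim!: Rats_cases intro: rsf_of_rat)

lemma rsf_sum: "real_subfield F \<Longrightarrow> (\<And>i. i \<in> A \<Longrightarrow> f i \<in> F) \<Longrightarrow> sum f A \<in> F"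
  by (induction A rule: infinite_finite_induct) (auto intro: rsf_basic)

lemma rsf_prod: "real_subfield F \<Longrightarrow> (\<And>i. i \<in> A \<Longrightarrow> f i \<in> F) \<Longrightarrow> prod f A \<in> F"
  by (induction A rule: infinite_finite_induct) (auto intro: rsf_basic)

lemma rsf_power: "real_subfield F \<Longrightarrow> x \<in> F \<Longrightarrow> x ^ n \<in> F"
  by (induction n) (auto intro: rsf_basic)

lemma real_subfield_Rats: "real_subfield \<rat>"
  unfolding real_subfield_def by auto

lemma gen_field_subfield: "real_subfield (gen_field x)"
  unfolding gen_field_def real_subfield_def by auto

lemma gen_field_in: "x \<in> gen_field x"
  unfolding gen_field_def by auto

lemma gen_field_least: "real_subfield F \<Longrightarrow> x \<in> F \<Longrightarrow> gen_field x \<subseteq> F"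
  unfolding gen_field_def by auto

lemma gen_field_rat: "x \<in> \<rat> \<Longrightarrow> gen_field x = \<rat>"
proof
  assume "x \<in> \<rat>"
  then show "gen_field x \<subseteq> \<rat>" by (intro gen_field_least real_subfield_Rats)
  show "\<rat> \<subseteq> gen_field x" using rsf_Rats[OF gen_field_subfield] by auto
qed

section \<open>Coefficients in a subring\<close>

definition sring :: "'a::field set \<Rightarrow> bool" where
  "sring S \<longleftrightarrow> 0 \<in> S \<and> 1 \<in> S \<and> (\<forall>x\<in>S. \<forall>y\<in>S. x + y \<in> S \<and> x * y \<in> S) \<and> (\<forall>x\<in>S. - x \<in> S)"

definition cin :: "'a::zero set \<Rightarrow> 'a poly \<Rightarrow> bool" where
  "cin S p \<longleftrightarrow> (\<forall>i. Polynomial.coeff p i \<in> S)"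

lemma sringD:
  assumes "sring S"
  shows "0 \<in> S" "1 \<in> S" "x \<in> S \<Longrightarrow> y \<in> S \<Longrightarrow> x + y \<in> S"
    "x \<in> S \<Longrightarrow> y \<in> S \<Longrightarrow> x * y \<in> S" "x \<in> S \<Longrightarrow> - x \<in> S"
    "x \<in> S \<Longrightarrow> y \<in> S \<Longrightarrow> x - y \<in> S"
  using assms unfolding sring_def
  by (simp, simp, blast, blast, blast, metis diff_conv_add_uminus)

lemma sring_sum: "sring S \<Longrightarrow> (\<And>i. i \<in> A \<Longrightarrow> f i \<in> S) \<Longrightarrow> sum f A \<in> S"
  by (induction A rule: infinite_finite_induct) (auto intro: sringD)

lemma sring_power: "sring S \<Longrightarrow> x \<in> S \<Longrightarrow> x ^ n \<in> S"
  by (induction n) (auto intro: sringD)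

lemma sring_rsf: "real_subfield F \<Longrightarrow> sring F"
  unfolding sring_def by (auto intro: rsf_basic)

lemma sring_Ints: "sring (\<int> :: 'a::field set)"
  unfolding sring_def by auto

lemma cin_0[simp]: "sring S \<Longrightarrow> cin S 0"
  unfolding cin_def using sringD(1)[of S] by auto

lemma cin_add: "sring S \<Longrightarrow> cin S p \<Longrightarrow> cin S q \<Longrightarrow> cin S (p + q)"
  unfolding cin_def using sringD(3)[of S] by (simp add: coeff_add)

lemma cin_diff: "sring S \<Longrightarrow> cin S p \<Longrightarrow> cin S q \<Longrightarrow> cin S (p - q)"
  unfolding cin_def using sringD(6)[of S] by (simp add: coeff_diff)

lemma cin_uminus: "sring S \<Longrightarrow> cin S p \<Longrightarrow> cin S (- p)"
  unfolding cin_def using sringD(5)[of S] by simp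

lemma cin_mult: "sring S \<Longrightarrow> cin S p \<Longrightarrow> cin S q \<Longrightarrow> cin S (p * q)"
  unfolding cin_def coeff_mult by (intro allI sring_sum) (auto intro: sringD(4))

lemma cin_smult: "sring S \<Longrightarrow> c \<in> S \<Longrightarrow> cin S p \<Longrightarrow> cin S (Polynomial.smult c p)"
  unfolding cin_def using sringD(4)[of S] by simp

lemma cin_monom: "sring S \<Longrightarrow> c \<in> S \<Longrightarrow> cin S (Polynomial.monom c n)"
  unfolding cin_def using sringD(1)[of S] by (simp add: coeff_monom)

lemma cin_pCons: "sring S \<Longrightarrow> c \<in> S \<Longrightarrow> cin S p \<Longrightarrow> cin S (pCons c p)"
  unfolding cin_def by (metis coeff_pCons_0 coeff_pCons_Suc not0_implies_Suc)

lemma cin_const: "sring S \<Longrightarrow> c \<in> S \<Longrightarrow> cin S [:c:]"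
  by (intro cin_pCons) auto

lemma cin_1: "sring S \<Longrightarrow> cin S 1"
  using cin_const[of S 1] sringD(2)[of S] by (metis one_pCons)

lemma cin_pcompose: "sring S \<Longrightarrow> cin S p \<Longrightarrow> cin S q \<Longrightarrow> cin S (pcompose p q)"
proof (induction p)
  case 0
  then show ?case by simp
next
  case (pCons a p)
  have "a \<in> S" using pCons.prems unfolding cin_def by (metis coeff_pCons_0)
  moreover have "cin S p" using pCons.prems unfolding cin_def by (metis coeff_pCons_Suc)
  ultimately show ?case using pCons
    by (simp add: pcompose_pCons cin_add cin_const cin_mult)
qed

lemma mod_cin:
  fixes a b :: "'a::field poly"
  assumes S: "sring S" and b: "b \<noteq> 0" "inverse (lead_coeff b) \<in> S" "cin S b"
  shows "cin S a \<Longrightarrow> cin S (a mod b)"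
proof (induction "degree a" arbitrary: a rule: less_induct)
  case less
  show ?case
  proof (cases "degree a < degree b")
    case True
    then show ?thesis using less.prems by (simp add: mod_poly_less)
  next
    case False
    define d where "d = degree a"
    define e where "e = degree b"
    define c where "c = lead_coeff a * inverse (lead_coeff b)"
    define a' where "a' = a - Polynomial.smult c (Polynomial.monom 1 (d - e) * b)"
    have cS: "c \<in> S" unfolding c_def using less.prems b S unfolding cin_def by (auto intro: sringD)
    have a': "cin S a'" unfolding a'_def
      by (intro cin_diff cin_smult cin_mult cin_monom S cS less.prems b sringD(2)[OF S])
    have de: "e \<le> d" using False d_def e_def by auto
    have degm: "degree (Polynomial.monom (1::'a) (d - e) * b) \<le> d"
      using degree_mult_le[of "Polynomial.monom (1::'a) (d-e)" b] de e_def by (simp add: degree_monom_eq)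
    have cm: "Polynomial.coeff (Polynomial.monom (1::'a) (d - e) * b) d = lead_coeff b"
      using de e_def by (simp add: coeff_monom_mult)
    have "\<forall>i>d. Polynomial.coeff a' i = 0"
    proof (intro allI impI)
      fix i assume "d < i"
      then have "Polynomial.coeff a i = 0" "Polynomial.coeff (Polynomial.monom (1::'a) (d - e) * b) i = 0"
        using d_def degm by (auto intro: coeff_eq_0)
      then show "Polynomial.coeff a' i = 0" unfolding a'_def by simp
    qed
    then have dle: "degree a' \<le> d" by (intro degree_le) auto
    have "Polynomial.coeff a' d = 0" unfolding a'_def c_def using cm b d_def by simp
    then have "a' = 0 \<or> degree a' < d" using dle
      by (metis le_neq_implies_less leading_coeff_0_iff)
    then have IH: "cin S (a' mod b)"
    proof
      assume "a' = 0" then show ?thesis using S by simp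
    next
      assume "degree a' < d" then show ?thesis using less.hyps[of a'] a' d_def by auto
    qed
    have "a = a' + (Polynomial.smult c (Polynomial.monom 1 (d - e))) * b" unfolding a'_def by (simp add: mult_smult_left)
    then have "a mod b = a' mod b" by (metis mod_mult_self1)
    then show ?thesis using IH by simp
  qed
qed

lemma gcd_cin:
  fixes a b :: "real poly"
  assumes S: "sring S" and inv: "\<And>x. x \<in> S \<Longrightarrow> x \<noteq> 0 \<Longrightarrow> inverse x \<in> S"
  shows "cin S a \<Longrightarrow> cin S b \<Longrightarrow> cin S (gcd a b)"
proof (induction "degree b" arbitrary: a b rule: less_induct)
  case less
  have norm: "cin S (normalize p)" if "cin S p" for p :: "real poly"
  proof (cases "p = 0")
    case True then show ?thesis using S by simp
  next
    case False
    have "normalize p = Polynomial.smult (inverse (lead_coeff p)) p"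
      using False by (simp add: normalize_poly_eq_map_poly smult_conv_map_poly field_simps)
    moreover have "inverse (lead_coeff p) \<in> S" using inv that False unfolding cin_def by auto
    ultimately show ?thesis using cin_smult[OF S _ that] by simp
  qed
  show ?case
  proof (cases "b = 0")
    case True then show ?thesis using norm less.prems by simp
  next
    case False
    have g: "gcd a b = gcd b (a mod b)" using False by (simp add: gcd.commute)
    have m: "cin S (a mod b)"
      using mod_cin[OF S False _ less.prems(2) less.prems(1)] inv less.prems(2) False
      unfolding cin_def by auto
    show ?thesis
    proof (cases "a mod b = 0")
      case True then show ?thesis using g norm less.prems by simp
    next
      case f2: False
      then have "degree (a mod b) < degree b" using False degree_mod_less' by blast
      then show ?thesis using less.hyps less.prems m g by metis
    qed
  qed
qed


interpretation rc_poly_hom: map_poly_idom_hom "complex_of_real" ..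
interpretation qr_poly_hom: map_poly_idom_hom "real_of_rat" ..
interpretation qc_poly_hom: map_poly_idom_hom "of_rat :: rat \<Rightarrow> complex" ..

lemma of_int_poly_complex_real:
  "(map_poly (of_int :: int \<Rightarrow> complex) p) = map_poly complex_of_real (map_poly of_int p)"
  by (subst map_poly_map_poly) (auto simp: o_def)

lemma ipoly_complex_of_real:
  "poly (map_poly (of_int :: int \<Rightarrow> complex) p) (complex_of_real x) =
   complex_of_real (poly (map_poly of_int p) x)"
  unfolding of_int_poly_complex_real by (simp add: of_real_hom.poly_map_poly)

lemma map_real_complex_dvd:
  fixes p q :: "real poly"
  shows "p dvd q \<Longrightarrow> map_poly complex_of_real p dvd map_poly complex_of_real q"
  by (elim dvdE) (simp add: hom_distribs)

lemma gcd_root_in_field: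
  fixes P H :: "real poly"
  assumes F: "real_subfield F" and cP: "cin F P" and cH: "cin F H" and P0: "P \<noteq> 0"
    and Px: "poly P x = 0" and Hx: "poly H x = 0"
    and sqf: "rsquarefree (map_poly complex_of_real P)"
    and uniq: "\<And>w. poly (map_poly complex_of_real P) w = 0 \<Longrightarrow>
                     poly (map_poly complex_of_real H) w = 0 \<Longrightarrow> w = complex_of_real x"
  shows "x \<in> F"
proof -
  define G where "G = gcd P H"
  have S: "sring F" using F by (rule sring_rsf)
  have cG: "cin F G" unfolding G_def
    by (rule gcd_cin[OF S _ cP cH]) (use rsf_basic(6)[OF F] in auto)
  have G0: "G \<noteq> 0" using P0 unfolding G_def by auto
  have mon: "lead_coeff G = 1" using poly_gcd_monic[of P H] P0 unfolding G_def by auto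
  have "[:-x, 1:] dvd G" unfolding G_def using Px Hx by (simp add: poly_eq_0_iff_dvd)
  then obtain G2 where G2: "G = [:-x, 1:] * G2" by (elim dvdE)
  have G20: "G2 \<noteq> 0" using G0 G2 by auto
  have "degree G2 = 0"
  proof (rule ccontr)
    assume "degree G2 \<noteq> 0"
    then have "\<not> constant (poly (map_poly complex_of_real G2))"
      by (simp add: constant_degree)
    then obtain w where w: "poly (map_poly complex_of_real G2) w = 0"
      using fundamental_theorem_of_algebra by blast
    have GP: "map_poly complex_of_real G dvd map_poly complex_of_real P"
      unfolding G_def by (intro map_real_complex_dvd) simp
    have GH: "map_poly complex_of_real G dvd map_poly complex_of_real H"
      unfolding G_def by (intro map_real_complex_dvd) simp
    have Gc: "map_poly complex_of_real G = [:- complex_of_real x, 1:] * map_poly complex_of_real G2"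
      unfolding G2 by (simp add: hom_distribs)
    have "poly (map_poly complex_of_real G) w = 0" using w Gc by simp
    then have "poly (map_poly complex_of_real P) w = 0" "poly (map_poly complex_of_real H) w = 0"
      using GP GH by (auto simp: poly_eq_0_iff_dvd dest: dvd_trans)
    then have wx: "w = complex_of_real x" using uniq by auto
    have "[:- w, 1:] dvd map_poly complex_of_real G2"
      using w poly_eq_0_iff_dvd by blast
    then have "[:- complex_of_real x, 1:] dvd map_poly complex_of_real G2"
      unfolding wx .
    then have "[:- complex_of_real x, 1:] ^ 2 dvd map_poly complex_of_real G"
      unfolding Gc power2_eq_square by (metis mult_dvd_mono dvd_refl)
    then have "[:- complex_of_real x, 1:] ^ 2 dvd map_poly complex_of_real P"
      using GP by (rule dvd_trans)
    then have "2 \<le> Polynomial.order (complex_of_real x) (map_poly complex_of_real P)"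
      using P0 by (intro order_max) auto
    moreover have "Polynomial.order (complex_of_real x) (map_poly complex_of_real P) = 0 \<or>
       Polynomial.order (complex_of_real x) (map_poly complex_of_real P) = 1"
      using sqf unfolding rsquarefree_def by blast
    ultimately show False by linarith
  qed
  then obtain c where c: "G2 = [:c:]" by (metis degree_eq_zeroE)
  have "lead_coeff G = c" unfolding G2 c using G20 c by simp
  then have "G = [:-x, 1:]" using mon G2 c by simp
  then have "- x \<in> F" using cG unfolding cin_def by (metis coeff_pCons_0)
  then show ?thesis using rsf_basic(5)[OF F, of "-x"] by simp
qed


lemma irreducible_bezout:
  fixes P g :: "rat poly"
  assumes irr: "irreducible P" and nd: "\<not> P dvd g"
  shows "\<exists>u v. u * P + v * g = 1"
proof -
  define d where "d = gcd P g"
  have "d dvd P" unfolding d_def by simp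
  then obtain e where Pe: "P = d * e" by (elim dvdE)
  then have "is_unit d \<or> is_unit e" using irr by (meson irreducibleD)
  moreover have "\<not> is_unit e"
  proof
    assume "is_unit e"
    then have "P dvd d" using Pe by (metis dvd_mult_unit_iff dvd_refl)
    then have "P dvd g" unfolding d_def using dvd_trans gcd_dvd2 by blast
    then show False using nd by simp
  qed
  ultimately have "is_unit d" by blast
  then have "d = 1" unfolding d_def by (metis is_unit_gcd coprime_iff_gcd_eq_1)
  then show ?thesis unfolding d_def using bezout_coefficients_fst_snd[of P g] by metis
qed

lemma irreducible_rat_dvd_of_root:
  fixes P g :: "rat poly"
  assumes irr: "irreducible P"
    and z1: "poly (map_poly (of_rat :: rat \<Rightarrow> complex) P) z = 0"
    and z2: "poly (map_poly (of_rat :: rat \<Rightarrow> complex) g) z = 0"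
  shows "P dvd g"
proof (rule ccontr)
  assume "\<not> P dvd g"
  then obtain u v where "u * P + v * g = 1" using irreducible_bezout[OF irr] by blast
  then have "map_poly (of_rat :: rat \<Rightarrow> complex) (u * P + v * g) = 1" by simp
  then have "poly (map_poly (of_rat :: rat \<Rightarrow> complex) (u * P + v * g)) z = 1" by simp
  then show False using z1 z2 by (simp add: hom_distribs)
qed

lemma irreducible_rat_rsquarefree:
  fixes P :: "rat poly"
  assumes irr: "irreducible P"
  shows "rsquarefree (map_poly (of_rat :: rat \<Rightarrow> complex) P)"
  unfolding rsquarefree_roots
proof (intro allI notI)
  fix a assume a: "poly (map_poly of_rat P) a = 0 \<and> poly (pderiv (map_poly (of_rat :: rat \<Rightarrow> complex) P)) a = 0"
  have degP: "degree P \<noteq> 0"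
  proof
    assume "degree P = 0"
    then obtain c where c: "P = [:c:]" by (elim degree_eq_zeroE)
    show False
    proof (cases "c = 0")
      case True then show False using irr c by simp
    next
      case False
      then have "is_unit P" unfolding c by (simp add: is_unit_const_poly_iff)
      then show False using irr by (simp add: irreducible_def)
    qed
  qed
  have "P dvd pderiv P"
    using irreducible_rat_dvd_of_root[OF irr, of a "pderiv P"] a by (simp add: of_rat_hom.map_poly_pderiv)
  moreover have "pderiv P \<noteq> 0" using degP by (simp add: pderiv_eq_0_iff)
  ultimately have "degree P \<le> degree (pderiv P)" by (simp add: dvd_imp_degree_le)
  moreover have "degree (pderiv P) < degree P" using degP by (simp add: degree_pderiv)
  ultimately show False by simp
qed

lemma monic_irreducible_int_rat:
  fixes p :: "int poly"
  assumes irr: "irreducible p" and mon: "lead_coeff p = 1"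
  shows "irreducible (map_poly rat_of_int p)" "degree p \<noteq> 0"
proof -
  show deg: "degree p \<noteq> 0"
  proof
    assume "degree p = 0"
    then have "p = 1" using mon by (metis leading_coeff_0_iff one_neq_zero degree_0_id one_pCons)
    then show False using irr by simp
  qed
  have prim: "primitive p" using irreducible_imp_primitive[OF irr deg] .
  have "irreducible\<^sub>d p" using irreducible_primitive_connect[OF prim] irr by simp
  then have "irreducible\<^sub>d (map_poly rat_of_int p)" by (rule irreducible\<^sub>d_int_rat)
  moreover have "primitive (map_poly rat_of_int p)"
    using deg by (cases "p = 0") (auto simp: content_field_poly)
  ultimately show "irreducible (map_poly rat_of_int p)"
    using irreducible_primitive_connect by blast
qed

lemma of_rat_of_int_poly:
  "map_poly (of_rat :: rat \<Rightarrow> 'a::field_char_0) (map_poly rat_of_int p) = map_poly of_int p"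
  by (subst map_poly_map_poly) (auto simp: o_def)

lemma int_poly_rsquarefree:
  fixes p :: "int poly"
  assumes irr: "irreducible p" and mon: "lead_coeff p = 1"
  shows "rsquarefree (map_poly (of_int :: int \<Rightarrow> complex) p)"
  using irreducible_rat_rsquarefree[OF monic_irreducible_int_rat(1)[OF irr mon]]
  by (simp add: of_rat_of_int_poly)

text \<open>Minimality: an irreducible monic integer polynomial divides (over Q) any
  integer polynomial sharing a complex root with it.\<close>

lemma int_poly_min:
  fixes p g :: "int poly"
  assumes irr: "irreducible p" and mon: "lead_coeff p = 1"
    and z1: "poly (map_poly (of_int :: int \<Rightarrow> complex) p) z = 0"
    and z2: "poly (map_poly (of_int :: int \<Rightarrow> complex) g) z = 0"
    and w: "poly (map_poly (of_int :: int \<Rightarrow> complex) p) w = 0"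
  shows "poly (map_poly (of_int :: int \<Rightarrow> complex) g) w = 0"
proof -
  have "map_poly rat_of_int p dvd map_poly rat_of_int g"
    using irreducible_rat_dvd_of_root[OF monic_irreducible_int_rat(1)[OF irr mon], of z]
    z1 z2 by (simp add: of_rat_of_int_poly)
  then obtain h where h: "map_poly rat_of_int g = map_poly rat_of_int p * h" by (elim dvdE)
  have "map_poly (of_int :: int \<Rightarrow> complex) g = map_poly of_int p * map_poly of_rat h"
    using arg_cong[OF h, of "map_poly (of_rat :: rat \<Rightarrow> complex)"]
    by (simp add: hom_distribs of_rat_of_int_poly)
  then show ?thesis using w by simp
qed


lemma poly_prod_mset_zero:
  fixes M :: "int poly multiset"
  assumes "poly (map_poly (of_int :: int \<Rightarrow> complex) (prod_mset M)) z = 0"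
  shows "\<exists>r\<in>#M. poly (map_poly (of_int :: int \<Rightarrow> complex) r) z = 0"
  using assms
proof (induction M)
  case empty then show ?case by simp
next
  case (add r M)
  then show ?case by (auto simp: of_int_poly_hom.hom_mult)
qed

lemma monic_irreducible_factor:
  fixes q :: "int poly"
  assumes mon: "lead_coeff q = 1" and z: "poly (map_poly (of_int :: int \<Rightarrow> complex) q) z = 0"
  shows "\<exists>r. irreducible r \<and> lead_coeff r = 1 \<and> r dvd q \<and>
             poly (map_poly (of_int :: int \<Rightarrow> complex) r) z = 0"
proof -
  have q0: "q \<noteq> 0" using mon by auto
  have nq: "normalize q = q" using mon by (simp add: normalize_poly_def)
  have "normalize (prod_mset (prime_factorization q)) = q"
    using prod_mset_prime_factorization_weak[OF q0] nq by simp
  then have "q dvd prod_mset (prime_factorization q)" by (metis normalize_dvd_iff dvd_refl)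
  then have "map_poly (of_int :: int \<Rightarrow> complex) q dvd map_poly of_int (prod_mset (prime_factorization q))"
    by (rule of_int_poly_hom.hom_dvd)
  then have "poly (map_poly (of_int :: int \<Rightarrow> complex) (prod_mset (prime_factorization q))) z = 0"
    using z by (metis dvd_trans poly_eq_0_iff_dvd)
  then obtain r where r: "r \<in># prime_factorization q"
    and rz: "poly (map_poly (of_int :: int \<Rightarrow> complex) r) z = 0"
    using poly_prod_mset_zero[of "prime_factorization q" z] by auto
  have pr: "prime r" using r by (rule in_prime_factors_imp_prime)
  have rq: "r dvd q" using r by (rule in_prime_factors_imp_dvd)
  have irr: "irreducible r" using pr prime_elem_imp_irreducible prime_imp_prime_elem by blast
  have r0: "r \<noteq> 0" using pr by auto
  have nr: "normalize r = r" using pr by (simp add: prime_def)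
  have "unit_factor r * normalize r = r" by (rule unit_factor_mult_normalize)
  then have "unit_factor r = 1" using nr r0 by (metis mult_cancel_right2)
  then have "sgn (lead_coeff r) = 1" by (simp add: unit_factor_poly_def)
  then have pos: "lead_coeff r > 0" by (simp add: sgn_1_pos)
  obtain s where "q = r * s" using rq by (elim dvdE)
  then have "lead_coeff r * lead_coeff s = 1" using mon by (simp add: lead_coeff_mult)
  then have "lead_coeff r = 1" using pos by (simp add: pos_zmult_eq_1_iff)
  then show ?thesis using irr rq rz by blast
qed

section \<open>Integrality of conjugate polynomials\<close>

lemma poly_sum_lt:
  fixes g :: "'a::comm_semiring_1 poly"
  assumes "degree g < n"
  shows "poly g z = (\<Sum>j<n. Polynomial.coeff g j * z ^ j)"
proof -
  have "poly g z = (\<Sum>j\<le>degree g. Polynomial.coeff g j * z ^ j)" by (simp add: poly_altdef)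
  also have "\<dots> = (\<Sum>j<n. Polynomial.coeff g j * z ^ j)"
    using assms by (intro sum.mono_neutral_left) (auto simp: coeff_eq_0)
  finally show ?thesis .
qed

lemma Ints_floor_eq: "(x :: rat) \<in> \<int> \<Longrightarrow> of_int \<lfloor>x\<rfloor> = x"
  by (auto elim: Ints_cases)

lemma integrality:
  fixes p f :: "int poly"
  assumes irr: "irreducible p" and mon: "lead_coeff p = 1"
  shows "\<exists>q::int poly. lead_coeff q = 1 \<and>
     (\<forall>z. poly (map_poly (of_int :: int \<Rightarrow> complex) p) z = 0 \<longrightarrow>
          poly (map_poly of_int q) (poly (map_poly of_int f) z) = 0) \<and>
     (\<forall>w. poly (map_poly (of_int :: int \<Rightarrow> complex) q) w = 0 \<longrightarrow>
          (\<exists>z. poly (map_poly of_int p) z = 0 \<and> w = poly (map_poly of_int f) z))"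
proof -
  define n where "n = degree p"
  have n0: "n \<noteq> 0" unfolding n_def by (rule monic_irreducible_int_rat(2)[OF irr mon])
  define P :: "rat poly" where "P = map_poly rat_of_int p"
  have P0: "P \<noteq> 0" and lcP: "lead_coeff P = 1" and degP: "degree P = n"
    using mon unfolding P_def n_def by auto
  define rk where "rk k = (map_poly rat_of_int (f * Polynomial.monom 1 k)) mod P" for k
  have rkZ: "Polynomial.coeff (rk k) j \<in> \<int>" for k j
  proof -
    have "cin \<int> (rk k)" unfolding rk_def
      by (rule mod_cin[OF sring_Ints P0]) (use mon in \<open>auto simp: cin_def P_def\<close>)
    then show ?thesis unfolding cin_def by auto
  qed
  have rkdeg: "degree (rk k) < n" for k
  proof (cases "rk k = 0")
    case True then show ?thesis using n0 by simp
  next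
    case False then show ?thesis unfolding rk_def using degree_mod_less'[OF P0] degP by (auto simp: rk_def)
  qed
  define M :: "int mat" where "M = mat n n (\<lambda>(j, k). \<lfloor>Polynomial.coeff (rk k) j\<rfloor>)"
  define Mc :: "complex mat" where "Mc = map_mat of_int M"
  have M: "M \<in> carrier_mat n n" unfolding M_def by simp
  have Mc: "Mc \<in> carrier_mat n n" unfolding Mc_def M_def by simp
  have Mc_ent: "Mc $$ (j, k) = of_rat (Polynomial.coeff (rk k) j)" if "j < n" "k < n" for j k
  proof -
    have "Mc $$ (j, k) = of_int \<lfloor>Polynomial.coeff (rk k) j\<rfloor>" using that unfolding Mc_def M_def by simp
    also have "\<dots> = of_rat (rat_of_int \<lfloor>Polynomial.coeff (rk k) j\<rfloor>)" by (rule of_rat_of_int_eq[symmetric])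
    also have "rat_of_int \<lfloor>Polynomial.coeff (rk k) j\<rfloor> = Polynomial.coeff (rk k) j" using Ints_floor_eq[OF rkZ] .
    finally show ?thesis .
  qed
  let ?pc = "map_poly (of_int :: int \<Rightarrow> complex) p"
  let ?fc = "map_poly (of_int :: int \<Rightarrow> complex) f"
  have KI: "(\<Sum>j<n. Mc $$ (j, k) * z ^ j) = poly ?fc z * z ^ k" if z: "poly ?pc z = 0" and k: "k < n" for z k
  proof -
    have "(\<Sum>j<n. Mc $$ (j, k) * z ^ j) = (\<Sum>j<n. Polynomial.coeff (map_poly (of_rat :: rat \<Rightarrow> complex) (rk k)) j * z ^ j)"
      using k by (intro sum.cong) (auto simp: Mc_ent)
    also have "\<dots> = poly (map_poly (of_rat :: rat \<Rightarrow> complex) (rk k)) z"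
      using rkdeg[of k] by (intro poly_sum_lt[symmetric]) simp
    also have "rk k = map_poly rat_of_int (f * Polynomial.monom 1 k) - (map_poly rat_of_int (f * Polynomial.monom 1 k) div P) * P"
      unfolding rk_def by (simp add: minus_div_mult_eq_mod)
    also have "poly (map_poly (of_rat :: rat \<Rightarrow> complex) \<dots>) z = poly ?fc z * z ^ k"
      using z by (simp add: hom_distribs of_rat_of_int_poly P_def poly_monom)
    finally show ?thesis .
  qed
  define q where "q = char_poly M"
  have q: "degree q = n \<and> lead_coeff q = 1" unfolding q_def using degree_monic_char_poly[OF M] by simp
  have qc: "map_poly (of_int :: int \<Rightarrow> complex) q = char_poly Mc"
    unfolding q_def Mc_def by (rule sym, rule of_int_hom.char_poly_hom[OF M])
  have part1: "poly (map_poly of_int q) (poly ?fc z) = 0" if z: "poly ?pc z = 0" for z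
  proof -
    define u where "u = vec n (\<lambda>j. z ^ j)"
    have "eigenvector (transpose_mat Mc) u (poly ?fc z)"
      unfolding eigenvector_def
    proof (intro conjI)
      show "u \<in> carrier_vec (dim_row (transpose_mat Mc))" using Mc unfolding u_def by simp
      show "u \<noteq> 0\<^sub>v (dim_row (transpose_mat Mc))"
      proof
        assume "u = 0\<^sub>v (dim_row (transpose_mat Mc))"
        then have "u $ 0 = 0" using Mc n0 by simp
        then show False unfolding u_def using n0 by simp
      qed
      show "transpose_mat Mc *\<^sub>v u = poly ?fc z \<cdot>\<^sub>v u"
      proof (rule eq_vecI)
        fix k assume "k < dim_vec (poly ?fc z \<cdot>\<^sub>v u)"
        then have k: "k < n" unfolding u_def by simp
        have "(transpose_mat Mc *\<^sub>v u) $ k = (\<Sum>j<n. Mc $$ (j, k) * z ^ j)"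
          using Mc k unfolding u_def by (simp add: scalar_prod_def lessThan_atLeast0 row_def)
        also have "\<dots> = (poly ?fc z \<cdot>\<^sub>v u) $ k" using KI[OF z k] k unfolding u_def by simp
        finally show "(transpose_mat Mc *\<^sub>v u) $ k = (poly ?fc z \<cdot>\<^sub>v u) $ k" .
      qed (use Mc in \<open>simp add: u_def\<close>)
    qed
    then have "eigenvalue (transpose_mat Mc) (poly ?fc z)" unfolding eigenvalue_def by blast
    then have "poly (char_poly (transpose_mat Mc)) (poly ?fc z) = 0"
      using eigenvalue_root_char_poly[of "transpose_mat Mc" n] Mc by simp
    then show ?thesis using qc char_poly_transpose_mat[OF Mc] by simp
  qed
  have part2: "\<exists>z. poly ?pc z = 0 \<and> w = poly ?fc z" if w: "poly (map_poly of_int q) w = 0" for w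
  proof (rule ccontr)
    assume nz: "\<not> (\<exists>z. poly ?pc z = 0 \<and> w = poly ?fc z)"
    have "eigenvalue Mc w" using eigenvalue_root_char_poly[OF Mc] w qc by simp
    then obtain v where v: "v \<in> carrier_vec n" "v \<noteq> 0\<^sub>v n" "Mc *\<^sub>v v = w \<cdot>\<^sub>v v"
      unfolding eigenvalue_def eigenvector_def using Mc by auto
    define W where "W = (\<Sum>k<n. Polynomial.monom (v $ k) k)"
    have Wc: "Polynomial.coeff W k = (if k < n then v $ k else 0)" for k
      unfolding W_def by (simp add: coeff_sum coeff_monom)
    have Wz: "poly W z = 0" if z: "poly ?pc z = 0" for z
    proof -
      have "(\<Sum>j<n. z ^ j * (Mc *\<^sub>v v) $ j) = (\<Sum>j<n. z ^ j * (\<Sum>k<n. Mc $$ (j, k) * v $ k))"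
        using Mc v(1) by (intro sum.cong) (auto simp: scalar_prod_def lessThan_atLeast0 row_def)
      also have "\<dots> = (\<Sum>j<n. \<Sum>k<n. v $ k * (Mc $$ (j, k) * z ^ j))"
        by (simp add: sum_distrib_left mult_ac)
      also have "\<dots> = (\<Sum>k<n. \<Sum>j<n. v $ k * (Mc $$ (j, k) * z ^ j))"
        by (rule sum.swap)
      also have "\<dots> = (\<Sum>k<n. v $ k * (\<Sum>j<n. Mc $$ (j, k) * z ^ j))"
        by (simp add: sum_distrib_left)
      also have "\<dots> = (\<Sum>k<n. v $ k * (poly ?fc z * z ^ k))"
        using KI[OF z] by (intro sum.cong) auto
      also have "\<dots> = poly ?fc z * poly W z"
        unfolding W_def by (simp add: poly_sum poly_monom sum_distrib_left mult_ac)
      finally have l: "(\<Sum>j<n. z ^ j * (Mc *\<^sub>v v) $ j) = poly ?fc z * poly W z" .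
      have mv: "(Mc *\<^sub>v v) $ j = w * v $ j" if "j < n" for j
        by (subst v(3)) (use v(1) that in simp)
      have "(\<Sum>j<n. z ^ j * (Mc *\<^sub>v v) $ j) = (\<Sum>j<n. z ^ j * (w * v $ j))"
        using mv by (intro sum.cong) auto
      also have "\<dots> = w * poly W z"
        unfolding W_def by (simp add: poly_sum poly_monom sum_distrib_left mult_ac)
      finally have "(poly ?fc z - w) * poly W z = 0" using l by (simp add: algebra_simps)
      moreover have "poly ?fc z \<noteq> w" using nz z by auto
      ultimately show ?thesis by simp
    qed
    have W0: "W = 0"
    proof (rule ccontr)
      assume W0: "W \<noteq> 0"
      have "degree W < n"
      proof -
        have "degree W \<le> n - 1" by (rule degree_le) (auto simp: Wc)
        then show ?thesis using n0 by simp
      qed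
      have "{z. poly ?pc z = 0} \<subseteq> {z. poly W z = 0}" using Wz by auto
      moreover have "card {z. poly ?pc z = 0} = n"
      proof -
        have p0: "p \<noteq> 0" using mon by auto
        then have "?pc \<noteq> 0" by simp
        then show ?thesis using rsquarefree_card_degree[of ?pc] int_poly_rsquarefree[OF irr mon] unfolding n_def
          by (simp add: degree_map_poly)
      qed
      moreover have "finite {z. poly W z = 0}" using W0 by (rule poly_roots_finite)
      ultimately have "n \<le> card {z. poly W z = 0}" by (metis card_mono)
      also have "\<dots> \<le> degree W" using W0 by (rule card_poly_roots_bound)
      finally show False using \<open>degree W < n\<close> by simp
    qed
    have "v = 0\<^sub>v n"
    proof (rule eq_vecI)
      fix k assume "k < dim_vec (0\<^sub>v n :: complex vec)"
      then have "k < n" by simp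
      then show "v $ k = 0\<^sub>v n $ k" using Wc[of k] W0 by simp
    qed (use v in auto)
    then show False using v by simp
  qed
  show ?thesis using q part1 part2 by blast
qed


lemma int_poly_in_field:
  assumes F: "real_subfield F" and x: "x \<in> F"
  shows "poly (map_poly (of_int :: int \<Rightarrow> real) f) x \<in> F"
  unfolding poly_altdef
  by (intro rsf_sum[OF F] rsf_basic(4)[OF F] rsf_power[OF F x]) (auto simp: rsf_of_int[OF F])

lemma cin_of_int_poly: "real_subfield F \<Longrightarrow> cin F (map_poly (of_int :: int \<Rightarrow> real) f)"
  unfolding cin_def by (auto simp: coeff_map_poly rsf_of_int)

lemma real_root_complex:
  "poly (map_poly (of_int :: int \<Rightarrow> real) p) x = 0 \<Longrightarrow>
   poly (map_poly (of_int :: int \<Rightarrow> complex) p) (complex_of_real x) = 0"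
  by (simp add: ipoly_complex_of_real)

lemma mem_pisot_set:
  fixes p f :: "int poly" and \<theta> :: real
  assumes irr: "irreducible p" and mon: "lead_coeff p = 1"
    and p\<theta>: "poly (map_poly of_int p) \<theta> = 0"
    and \<alpha>: "\<alpha> = poly (map_poly of_int f) \<theta>" and a1: "\<alpha> > 1"
    and small: "\<And>z. poly (map_poly (of_int :: int \<Rightarrow> complex) p) z = 0 \<Longrightarrow> z \<noteq> complex_of_real \<theta> \<Longrightarrow>
                  cmod (poly (map_poly of_int f) z) < 1"
  shows "\<alpha> \<in> pisot_set (gen_field \<theta>)"
proof -
  have aK: "\<alpha> \<in> gen_field \<theta>" unfolding \<alpha>
    by (rule int_poly_in_field[OF gen_field_subfield gen_field_in])
  obtain q :: "int poly" where q1: "lead_coeff q = 1"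
    and q2: "\<And>z. poly (map_poly (of_int :: int \<Rightarrow> complex) p) z = 0 \<Longrightarrow>
          poly (map_poly of_int q) (poly (map_poly of_int f) z) = 0"
    and q3: "\<And>w. poly (map_poly (of_int :: int \<Rightarrow> complex) q) w = 0 \<Longrightarrow>
          (\<exists>z. poly (map_poly of_int p) z = 0 \<and> w = poly (map_poly of_int f) z)"
    using integrality[OF irr mon, of f] by blast
  have fth: "poly (map_poly (of_int :: int \<Rightarrow> complex) f) (complex_of_real \<theta>) = complex_of_real \<alpha>"
    unfolding \<alpha> by (simp add: ipoly_complex_of_real)
  have "poly (map_poly (of_int :: int \<Rightarrow> complex) q) (complex_of_real \<alpha>) = 0"
    using q2[OF real_root_complex[OF p\<theta>]] fth by simp
  then obtain r where r: "irreducible r" "lead_coeff r = 1" "r dvd q"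
    "poly (map_poly (of_int :: int \<Rightarrow> complex) r) (complex_of_real \<alpha>) = 0"
    using monic_irreducible_factor[OF q1] by blast
  have ra: "poly (map_poly of_int r) \<alpha> = 0"
    using r(4) by (simp add: ipoly_complex_of_real)
  have rroots: "cmod z < 1" if z: "poly (map_poly (of_int :: int \<Rightarrow> complex) r) z = 0"
    and za: "z \<noteq> complex_of_real \<alpha>" for z
  proof -
    have "map_poly (of_int :: int \<Rightarrow> complex) r dvd map_poly of_int q"
      using r(3) by (rule of_int_poly_hom.hom_dvd)
    then have "poly (map_poly (of_int :: int \<Rightarrow> complex) q) z = 0"
      using z by (metis dvd_trans poly_eq_0_iff_dvd)
    then obtain z' where z': "poly (map_poly of_int p) z' = 0" "z = poly (map_poly of_int f) z'"
      using q3 by blast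
    have "z' \<noteq> complex_of_real \<theta>" using za z'(2) fth by auto
    then show ?thesis using small[OF z'(1)] z'(2) by simp
  qed
  have pis: "pisot \<alpha>" unfolding pisot_def using a1 r(1,2) ra rroots by blast
  have "\<theta> \<in> gen_field \<alpha>"
  proof (rule gcd_root_in_field[OF gen_field_subfield])
    let ?P = "map_poly (of_int :: int \<Rightarrow> real) p"
    let ?H = "[:\<alpha>:] - map_poly (of_int :: int \<Rightarrow> real) f"
    show "cin (gen_field \<alpha>) ?P" by (rule cin_of_int_poly[OF gen_field_subfield])
    show "cin (gen_field \<alpha>) ?H"
      by (intro cin_diff sring_rsf[OF gen_field_subfield] cin_const cin_of_int_poly[OF gen_field_subfield] gen_field_in)
    show "?P \<noteq> 0" using mon by auto
    show "poly ?P \<theta> = 0" by (rule p\<theta>)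
    show "poly ?H \<theta> = 0" using \<alpha> by simp
    show "rsquarefree (map_poly complex_of_real ?P)"
      using int_poly_rsquarefree[OF irr mon] by (simp add: of_int_poly_complex_real)
    fix w assume w1: "poly (map_poly complex_of_real ?P) w = 0"
      and w2: "poly (map_poly complex_of_real ?H) w = 0"
    have w1': "poly (map_poly (of_int :: int \<Rightarrow> complex) p) w = 0"
      using w1 by (simp add: of_int_poly_complex_real)
    have "map_poly complex_of_real ?H = [:complex_of_real \<alpha>:] - map_poly of_int f"
      by (simp add: hom_distribs of_int_poly_complex_real)
    then have fw: "poly (map_poly (of_int :: int \<Rightarrow> complex) f) w = complex_of_real \<alpha>"
      using w2 by simp
    show "w = complex_of_real \<theta>"
    proof (rule ccontr)
      assume "w \<noteq> complex_of_real \<theta>"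
      then have "cmod (poly (map_poly of_int f) w) < 1" using small[OF w1'] by blast
      then show False using fw a1 by simp
    qed
  qed
  then have "gen_field \<theta> \<subseteq> gen_field \<alpha>" by (rule gen_field_least[OF gen_field_subfield])
  moreover have "gen_field \<alpha> \<subseteq> gen_field \<theta>" by (rule gen_field_least[OF gen_field_subfield aK])
  ultimately have "gen_field \<alpha> = gen_field \<theta>" by blast
  then show ?thesis unfolding pisot_set_def using aK pis by blast
qed

lemma pisot_conj:
  fixes p f :: "int poly" and \<theta> :: real
  assumes irr: "irreducible p" and mon: "lead_coeff p = 1"
    and p\<theta>: "poly (map_poly of_int p) \<theta> = 0"
    and pis: "pisot (poly (map_poly of_int f) \<theta>)"
    and z: "poly (map_poly (of_int :: int \<Rightarrow> complex) p) z = 0"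
  shows "poly (map_poly of_int f) z = complex_of_real (poly (map_poly of_int f) \<theta>) \<or>
         cmod (poly (map_poly of_int f) z) < 1"
proof -
  let ?a = "poly (map_poly (of_int :: int \<Rightarrow> real) f) \<theta>"
  obtain pa :: "int poly" where pa: "lead_coeff pa = 1" "irreducible pa"
    "poly (map_poly of_int pa) ?a = 0"
    "\<And>z. poly (map_poly (of_int :: int \<Rightarrow> complex) pa) z = 0 \<Longrightarrow> z \<noteq> complex_of_real ?a \<Longrightarrow> cmod z < 1"
    using pis unfolding pisot_def by blast
  define g where "g = pcompose pa f"
  have gev: "poly (map_poly (of_int :: int \<Rightarrow> complex) g) y = poly (map_poly of_int pa) (poly (map_poly of_int f) y)" for y
    unfolding g_def by (simp add: hom_distribs poly_pcompose)
  have "poly (map_poly (of_int :: int \<Rightarrow> complex) g) (complex_of_real \<theta>) = 0"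
    unfolding gev using pa(3) by (simp add: ipoly_complex_of_real)
  then have "poly (map_poly (of_int :: int \<Rightarrow> complex) g) z = 0"
    using int_poly_min[OF irr mon real_root_complex[OF p\<theta>] _ z] by blast
  then have "poly (map_poly (of_int :: int \<Rightarrow> complex) pa) (poly (map_poly of_int f) z) = 0"
    unfolding gev .
  then show ?thesis using pa(4) by blast
qed


section \<open>Simultaneous approximation on the unit circle\<close>

lemma floor_eq_diff: "\<lfloor>(x::real)\<rfloor> = \<lfloor>y\<rfloor> \<Longrightarrow> \<bar>x - y\<bar> < 1"
  by linarith

lemma dirichlet_unit:
  fixes U :: "complex set"
  assumes U: "finite U" and u1: "\<And>u. u \<in> U \<Longrightarrow> cmod u = 1"
  shows "\<exists>a\<ge>M. \<forall>u\<in>U. Re (u ^ a) \<ge> 4/5"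
proof -
  define M1 where "M1 = Suc M"
  define T where "T = {-10..10::int}"
  define h where "h j = restrict (\<lambda>u. (\<lfloor>10 * Re (u ^ (j * M1))\<rfloor>, \<lfloor>10 * Im (u ^ (j * M1))\<rfloor>)) U" for j
  define PP where "PP = PiE U (\<lambda>_. T \<times> T)"
  define N where "N = card PP"
  have fin: "finite PP" unfolding PP_def T_def using U by (intro finite_PiE) auto
  have hin: "h j \<in> PP" for j
  proof -
    have "(\<lfloor>10 * Re (u ^ (j * M1))\<rfloor>, \<lfloor>10 * Im (u ^ (j * M1))\<rfloor>) \<in> T \<times> T" if u: "u \<in> U" for u
    proof -
      have c: "cmod (u ^ (j * M1)) = 1" using u1[OF u] by (simp add: norm_power)
      have "\<bar>Re (u ^ (j * M1))\<bar> \<le> 1" "\<bar>Im (u ^ (j * M1))\<bar> \<le> 1"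
        using abs_Re_le_cmod[of "u ^ (j * M1)"] abs_Im_le_cmod[of "u ^ (j * M1)"] c by auto
      then show ?thesis unfolding T_def by (auto simp: abs_le_iff)
    qed
    then show ?thesis unfolding h_def PP_def by auto
  qed
  have "card (h ` {0..N}) \<le> card PP" using hin fin by (intro card_mono) auto
  also have "\<dots> < card {0..N}" unfolding N_def by simp
  finally have "\<not> inj_on h {0..N}" by (rule pigeonhole)
  then obtain i j where ij: "i \<in> {0..N}" "j \<in> {0..N}" "i \<noteq> j" "h i = h j"
    unfolding inj_on_def by blast
  obtain i j where ij: "i < j" "h i = h j"
    using ij by (metis linorder_neqE_nat)
  define a where "a = (j - i) * M1"
  have "j - i \<ge> 1" using ij(1) by simp
  then have aM: "a \<ge> M" unfolding a_def M1_def
    by (metis le_add2 mult.commute mult_Suc_right dual_order.trans mult_le_mono2 nat_mult_1_right)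
  have "Re (u ^ a) \<ge> 4/5" if u: "u \<in> U" for u
  proof -
    define x where "x = u ^ (j * M1)"
    define y where "y = u ^ (i * M1)"
    have "(\<lfloor>10 * Re x\<rfloor>, \<lfloor>10 * Im x\<rfloor>) = (\<lfloor>10 * Re y\<rfloor>, \<lfloor>10 * Im y\<rfloor>)"
      using fun_cong[OF ij(2), of u] u unfolding h_def x_def y_def by simp
    then have "\<bar>10 * Re x - 10 * Re y\<bar> < 1" "\<bar>10 * Im x - 10 * Im y\<bar> < 1"
      using floor_eq_diff by auto
    then have "\<bar>Re x - Re y\<bar> < 1/10" "\<bar>Im x - Im y\<bar> < 1/10" by arith+
    then have "\<bar>Re (x - y)\<bar> < 1/10" "\<bar>Im (x - y)\<bar> < 1/10" by simp_all
    then have d: "cmod (x - y) < 1/5" using cmod_le[of "x - y"] by linarith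
    have "j * M1 = i * M1 + a" unfolding a_def using ij(1) by (simp add: diff_mult_distrib)
    then have xy: "x = y * u ^ a" unfolding x_def y_def by (simp add: power_add)
    have y1: "cmod y = 1" unfolding y_def using u1[OF u] by (simp add: norm_power)
    have "x - y = y * (u ^ a - 1)" using xy by (simp add: algebra_simps)
    then have "cmod (u ^ a - 1) = cmod (x - y)" using y1 by (simp add: norm_mult)
    then have "cmod (u ^ a - 1) < 1/5" using d by simp
    moreover have "\<bar>Re (u ^ a - 1)\<bar> \<le> cmod (u ^ a - 1)" by (rule abs_Re_le_cmod)
    ultimately show ?thesis by simp
  qed
  then show ?thesis using aM by blast
qed

lemma uniform_small_powers:
  fixes Z :: "complex set"
  assumes "finite Z" "\<And>z. z \<in> Z \<Longrightarrow> cmod z < 1" "\<epsilon> > 0"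
  shows "\<exists>N. \<forall>n\<ge>N. \<forall>z\<in>Z. cmod z ^ n \<le> \<epsilon>"
  using assms
proof (induction Z rule: finite_induct)
  case empty then show ?case by simp
next
  case (insert z Z)
  then obtain N where N: "\<forall>n\<ge>N. \<forall>z\<in>Z. cmod z ^ n \<le> \<epsilon>" by auto
  obtain N2 where N2: "cmod z ^ N2 < \<epsilon>" using real_arch_pow_inv[OF insert.prems(2)] insert.prems(1) by auto
  have "cmod z ^ n \<le> \<epsilon>" if "n \<ge> N2" for n
  proof -
    have "cmod z ^ n \<le> cmod z ^ N2"
      using that insert.prems(1)[of z] by (intro power_decreasing) auto
    then show ?thesis using N2 by simp
  qed
  then show ?case using N by (intro exI[of _ "max N N2"]) auto
qed

lemma small_power_exists:
  assumes "x < 1" "0 \<le> (x::real)" "\<epsilon> > 0"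
  shows "\<exists>N. \<forall>n\<ge>N. x ^ n \<le> \<epsilon>"
proof -
  obtain N where "x ^ N < \<epsilon>" using real_arch_pow_inv assms by blast
  then show ?thesis using assms by (intro exI[of _ N] allI impI) (meson le_less_trans less_imp_le power_decreasing)
qed

section \<open>The lens estimate\<close>

lemma lens:
  fixes z :: complex
  assumes z0: "z \<noteq> 0" and b: "cmod z ^ b \<le> 1/8" and a: "cmod z ^ a \<le> 1/16"
    and re: "Re ((z / of_real (cmod z)) ^ a) \<ge> 4/5"
  shows "Re (z ^ a - z ^ (a + b)) \<ge> 27/40 * cmod z ^ a"
    "cmod (z ^ a - z ^ (a + b)) \<le> 9/8 * cmod z ^ a"
    "cmod (z ^ a - z ^ (a + b)) < 1"
    "cmod (1 - (z ^ a - z ^ (a + b))) < 1"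
proof -
  define s where "s = cmod z ^ a"
  define u where "u = z ^ a - z ^ (a + b)"
  have s0: "s > 0" unfolding s_def using z0 by simp
  have za: "z ^ a = of_real s * (z / of_real (cmod z)) ^ a"
    unfolding s_def using z0 by (simp add: power_divide)
  have "Re (z ^ a) = s * Re ((z / of_real (cmod z)) ^ a)" unfolding za by simp
  then have r1: "Re (z ^ a) \<ge> 4/5 * s" using re s0 by (simp add: mult_left_mono)
  have n2: "cmod (z ^ (a + b)) \<le> s / 8"
  proof -
    have "cmod (z ^ (a + b)) = s * cmod z ^ b" unfolding s_def by (simp add: norm_mult norm_power power_add)
    also have "\<dots> \<le> s * (1/8)" using b s0 by (intro mult_left_mono) auto
    finally show ?thesis by simp
  qed
  have "Re (z ^ (a + b)) \<le> s / 8" using n2 abs_Re_le_cmod[of "z ^ (a+b)"] by linarith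
  then show ru: "Re (z ^ a - z ^ (a + b)) \<ge> 27/40 * cmod z ^ a" using r1 unfolding s_def by simp
  have "cmod u \<le> cmod (z ^ a) + cmod (z ^ (a + b))" unfolding u_def by (rule norm_triangle_ineq4)
  also have "\<dots> \<le> s + s / 8" using n2 unfolding s_def by (simp add: norm_power)
  finally have cu: "cmod u \<le> 9/8 * s" by simp
  then show "cmod (z ^ a - z ^ (a + b)) \<le> 9/8 * cmod z ^ a" unfolding u_def s_def .
  have s16: "s \<le> 1/16" using a unfolding s_def .
  then show "cmod (z ^ a - z ^ (a + b)) < 1" using cu unfolding u_def by simp
  have "(cmod (1 - u))\<^sup>2 = (1 - Re u)\<^sup>2 + (Im u)\<^sup>2" by (simp add: cmod_power2)
  also have "\<dots> = 1 - 2 * Re u + ((Re u)\<^sup>2 + (Im u)\<^sup>2)" by (simp add: power2_eq_square algebra_simps)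
  also have "\<dots> = 1 - 2 * Re u + (cmod u)\<^sup>2" by (simp add: cmod_power2)
  also have "\<dots> \<le> 1 - 2 * (27/40 * s) + (9/8 * s)\<^sup>2"
    using ru cu unfolding u_def s_def by (intro add_mono diff_mono power_mono) auto
  also have "\<dots> < 1" using s0 s16 by (simp add: power2_eq_square algebra_simps)
  finally have "(cmod (1 - u))\<^sup>2 < 1\<^sup>2" by simp
  then show "cmod (1 - (z ^ a - z ^ (a + b))) < 1" unfolding u_def
    by (rule power_less_imp_less_base) simp
qed


lemma eventually_all_finite:
  assumes "finite Z" "\<And>z. z \<in> Z \<Longrightarrow> \<exists>N. \<forall>n\<ge>N. P z (n::nat)"
  shows "\<exists>N. \<forall>n\<ge>N. \<forall>z\<in>Z. P z n"
  using assms
proof (induction Z rule: finite_induct)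
  case empty then show ?case by simp
next
  case (insert z Z)
  obtain N1 where N1: "\<forall>n\<ge>N1. \<forall>z\<in>Z. P z n" using insert by auto
  obtain N2 where N2: "\<forall>n\<ge>N2. P z n" using insert.prems by auto
  show ?case using N1 N2 by (intro exI[of _ "max N1 N2"]) auto
qed

lemma big_power_exists:
  assumes "(x::real) > 1"
  shows "\<exists>N. \<forall>n\<ge>N. x ^ n \<ge> Y"
proof -
  obtain N where "Y < x ^ N" using real_arch_pow[OF assms] by blast
  then show ?thesis using assms by (intro exI[of _ N] allI impI)
    (meson less_le_trans less_imp_le power_increasing less_imp_le[of 1 x])
qed

lemma pisot_set_data:
  assumes "\<theta> \<in> pisot_set K"
  shows "\<exists>p. irreducible p \<and> lead_coeff p = 1 \<and> poly (map_poly (of_int :: int \<Rightarrow> real) p) \<theta> = 0 \<and>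
     (\<forall>z. poly (map_poly (of_int :: int \<Rightarrow> complex) p) z = 0 \<longrightarrow> z \<noteq> complex_of_real \<theta> \<longrightarrow> cmod z < 1) \<and>
     \<theta> > 1 \<and> gen_field \<theta> = K \<and> \<theta> \<in> K"
  using assms unfolding pisot_set_def pisot_def by blast

lemma ev_monom_diff:
  "poly (map_poly (of_int :: int \<Rightarrow> 'a::comm_ring_1) (Polynomial.monom 1 m - Polynomial.monom 1 k)) x = x ^ m - x ^ k"
  by (simp add: hom_distribs poly_monom map_poly_monom)

lemma roots_nonzero:
  fixes p :: "int poly"
  assumes irr: "irreducible p" and mon: "lead_coeff p = 1"
    and p\<theta>: "poly (map_poly (of_int :: int \<Rightarrow> real) p) \<theta> = 0" and t: "\<theta> \<noteq> 0"
  shows "poly (map_poly (of_int :: int \<Rightarrow> complex) p) 0 \<noteq> 0"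
proof
  assume "poly (map_poly (of_int :: int \<Rightarrow> complex) p) 0 = 0"
  then have c0: "Polynomial.coeff p 0 = 0" by (simp add: poly_0_coeff_0 coeff_map_poly)
  obtain p' where pp: "p = pCons 0 p'" using c0 by (metis pCons_cases coeff_pCons_0)
  then have "p = [:0, 1:] * p'" by simp
  moreover have "\<not> is_unit [:0, 1::int:]" by (simp add: poly_dvd_1)
  ultimately have "is_unit p'" using irr by (meson irreducibleD)
  then obtain c where c: "p' = [:c:]" "is_unit c" by (metis is_unit_poly_iff)
  have "poly (map_poly (of_int :: int \<Rightarrow> real) p) \<theta> = of_int c * \<theta>" unfolding pp c by (simp add: map_poly_simps)
  moreover have "c \<noteq> 0" using c by auto
  ultimately show False using p\<theta> t by simp
qed

lemma pisot_in_diff: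
  assumes th: "\<theta> \<in> pisot_set K"
  shows "\<theta> \<in> diff_set K"
proof -
  obtain p where irr: "irreducible p" and mon: "lead_coeff p = 1"
    and p\<theta>: "poly (map_poly (of_int :: int \<Rightarrow> real) p) \<theta> = 0"
    and sm: "\<And>z. poly (map_poly (of_int :: int \<Rightarrow> complex) p) z = 0 \<Longrightarrow> z \<noteq> complex_of_real \<theta> \<Longrightarrow> cmod z < 1"
    and t1: "\<theta> > 1" and gK: "gen_field \<theta> = K"
    using pisot_set_data[OF th] by blast
  define R where "R = {z. poly (map_poly (of_int :: int \<Rightarrow> complex) p) z = 0 \<and> z \<noteq> complex_of_real \<theta>}"
  have finR: "finite R" unfolding R_def using mon by (intro finite_subset[OF _ poly_roots_finite[of "map_poly (of_int :: int \<Rightarrow> complex) p"]]) auto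
  have "\<exists>N. \<forall>n\<ge>N. \<forall>z\<in>R. cmod z + 2 * cmod z ^ n < 1"
  proof (rule eventually_all_finite[OF finR])
    fix z assume "z \<in> R"
    then have z1: "cmod z < 1" using sm unfolding R_def by auto
    obtain N where "\<forall>n\<ge>N. cmod z ^ n \<le> (1 - cmod z) / 3"
      using small_power_exists[of "cmod z" "(1 - cmod z) / 3"] z1 by auto
    then have "cmod z + 2 * cmod z ^ n < 1" if "n \<ge> N" for n using z1 that by fastforce
    then show "\<exists>N. \<forall>n\<ge>N. cmod z + 2 * cmod z ^ n < 1" by blast
  qed
  then obtain a where a: "\<forall>z\<in>R. cmod z + 2 * cmod z ^ a < 1" by auto
  obtain b where b: "\<theta> ^ b \<ge> 3" using big_power_exists[OF t1, of 3] by auto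
  define f1 :: "int poly" where "f1 = Polynomial.monom 1 (a + b) - Polynomial.monom 1 a"
  define f2 :: "int poly" where "f2 = Polynomial.monom 1 1 + f1"
  have e1: "poly (map_poly (of_int :: int \<Rightarrow> 'a::comm_ring_1) f1) x = x ^ (a + b) - x ^ a" for x
    unfolding f1_def by (rule ev_monom_diff)
  have e2: "poly (map_poly (of_int :: int \<Rightarrow> 'a::comm_ring_1) f2) x = x + (x ^ (a + b) - x ^ a)" for x
    unfolding f2_def by (simp add: hom_distribs poly_monom map_poly_monom e1)
  have ta: "\<theta> ^ a \<ge> 1" using t1 by simp
  have a1: "\<theta> ^ (a + b) - \<theta> ^ a \<ge> 2"
  proof -
    have "\<theta> ^ (a + b) - \<theta> ^ a = \<theta> ^ a * (\<theta> ^ b - 1)" by (simp add: power_add algebra_simps)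
    also have "\<dots> \<ge> 1 * 2" using ta b by (intro mult_mono) auto
    finally show ?thesis by simp
  qed
  have bound1: "cmod (z ^ (a + b) - z ^ a) \<le> 2 * cmod z ^ a" if "cmod z < 1" for z :: complex
  proof -
    have "cmod (z ^ (a + b) - z ^ a) \<le> cmod z ^ (a + b) + cmod z ^ a"
      using norm_triangle_ineq4[of "z ^ (a+b)" "z ^ a"] by (simp add: norm_power)
    also have "cmod z ^ (a + b) \<le> cmod z ^ a" using that by (intro power_decreasing) auto
    finally show ?thesis by simp
  qed
  have m1: "\<theta> ^ (a + b) - \<theta> ^ a \<in> pisot_set K"
    unfolding gK[symmetric]
  proof (rule mem_pisot_set[OF irr mon p\<theta>])
    show "\<theta> ^ (a + b) - \<theta> ^ a = poly (map_poly of_int f1) \<theta>" by (simp add: e1)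
    show "\<theta> ^ (a + b) - \<theta> ^ a > 1" using a1 by simp
    fix z assume z: "poly (map_poly (of_int :: int \<Rightarrow> complex) p) z = 0" "z \<noteq> complex_of_real \<theta>"
    then have "z \<in> R" unfolding R_def by auto
    then have "cmod z + 2 * cmod z ^ a < 1" "cmod z < 1" using a sm z by auto
    moreover have "cmod z \<ge> 0" by simp
    ultimately have "cmod (z ^ (a + b) - z ^ a) < 1" using bound1[of z] by linarith
    then show "cmod (poly (map_poly of_int f1) z) < 1" by (simp add: e1)
  qed
  have m2: "\<theta> + (\<theta> ^ (a + b) - \<theta> ^ a) \<in> pisot_set K"
    unfolding gK[symmetric]
  proof (rule mem_pisot_set[OF irr mon p\<theta>])
    show "\<theta> + (\<theta> ^ (a + b) - \<theta> ^ a) = poly (map_poly of_int f2) \<theta>" by (simp add: e2)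
    show "\<theta> + (\<theta> ^ (a + b) - \<theta> ^ a) > 1" using a1 t1 by simp
    fix z assume z: "poly (map_poly (of_int :: int \<Rightarrow> complex) p) z = 0" "z \<noteq> complex_of_real \<theta>"
    then have "z \<in> R" unfolding R_def by auto
    then have zz: "cmod z + 2 * cmod z ^ a < 1" "cmod z < 1" using a sm z by auto
    have "cmod (z + (z ^ (a + b) - z ^ a)) \<le> cmod z + cmod (z ^ (a + b) - z ^ a)" by (rule norm_triangle_ineq)
    also have "\<dots> \<le> cmod z + 2 * cmod z ^ a" using bound1[OF zz(2)] by simp
    finally show "cmod (poly (map_poly of_int f2) z) < 1" using zz by (simp add: e2)
  qed
  have "\<theta> = (\<theta> + (\<theta> ^ (a + b) - \<theta> ^ a)) - (\<theta> ^ (a + b) - \<theta> ^ a)" by simp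
  moreover have "\<theta> + (\<theta> ^ (a + b) - \<theta> ^ a) > \<theta> ^ (a + b) - \<theta> ^ a" using t1 by simp
  ultimately show ?thesis unfolding diff_set_def using m1 m2 by blast
qed


lemma card_roots_int:
  fixes p :: "int poly"
  assumes irr: "irreducible p" and mon: "lead_coeff p = 1"
  shows "card {z. poly (map_poly (of_int :: int \<Rightarrow> complex) p) z = 0} = degree p"
proof -
  have p0: "p \<noteq> 0" using mon by auto
  then have "map_poly (of_int :: int \<Rightarrow> complex) p \<noteq> 0" by simp
  then show ?thesis using rsquarefree_card_degree[of "map_poly (of_int :: int \<Rightarrow> complex) p"]
    int_poly_rsquarefree[OF irr mon] by (simp add: degree_map_poly)
qed

lemma one_in_diff_and_more:
  assumes th: "\<theta> \<in> pisot_set K"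
  shows "1 \<in> diff_set K \<and> (K \<noteq> \<rat> \<longrightarrow> (\<forall>Y. \<exists>d \<in> diff_set K - pisot_set K. d > Y))"
proof -
  obtain p where irr: "irreducible p" and mon: "lead_coeff p = 1"
    and p\<theta>: "poly (map_poly (of_int :: int \<Rightarrow> real) p) \<theta> = 0"
    and sm: "\<And>z. poly (map_poly (of_int :: int \<Rightarrow> complex) p) z = 0 \<Longrightarrow> z \<noteq> complex_of_real \<theta> \<Longrightarrow> cmod z < 1"
    and t1: "\<theta> > 1" and gK: "gen_field \<theta> = K"
    using pisot_set_data[OF th] by blast
  define R where "R = {z. poly (map_poly (of_int :: int \<Rightarrow> complex) p) z = 0 \<and> z \<noteq> complex_of_real \<theta>}"
  have finR: "finite R" unfolding R_def using mon
    by (intro finite_subset[OF _ poly_roots_finite[of "map_poly (of_int :: int \<Rightarrow> complex) p"]]) auto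
  have R1: "cmod z < 1" if "z \<in> R" for z using sm that unfolding R_def by auto
  have p0: "poly (map_poly (of_int :: int \<Rightarrow> complex) p) 0 \<noteq> 0"
    using roots_nonzero[OF irr mon p\<theta>] t1 by simp
  have R0: "z \<noteq> 0" if "z \<in> R" for z using that p0 unfolding R_def by auto
  define U where "U = (\<lambda>z. z / complex_of_real (cmod z)) ` R"
  have finU: "finite U" unfolding U_def using finR by simp
  have U1: "cmod u = 1" if "u \<in> U" for u using that R0 unfolding U_def by (auto simp: norm_divide)
  have "\<exists>N. \<forall>n\<ge>N. \<forall>z\<in>R. cmod z ^ n \<le> 1/8"
    using uniform_small_powers[OF finR R1, of "1/8"] by simp
  then obtain N1 where N1: "\<forall>n\<ge>N1. \<forall>z\<in>R. cmod z ^ n \<le> 1/8" by blast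
  obtain N2 where N2: "\<forall>n\<ge>N2. \<theta> ^ n \<ge> 3" using big_power_exists[OF t1, of 3] by blast
  define b where "b = max N1 N2"
  have b1: "\<forall>z\<in>R. cmod z ^ b \<le> 1/8" and b2: "\<theta> ^ b \<ge> 3" using N1 N2 unfolding b_def by auto
  obtain M0 where M0: "\<forall>n\<ge>M0. \<forall>z\<in>R. cmod z ^ n \<le> 1/16"
    using uniform_small_powers[OF finR R1, of "1/16"] by auto
  define good where "good a \<longleftrightarrow> a \<ge> M0 \<and> (\<forall>u\<in>U. Re (u ^ a) \<ge> 4/5)" for a
  define \<alpha> where "\<alpha> a = \<theta> ^ (a + b) - \<theta> ^ a" for a
  define fa :: "nat \<Rightarrow> int poly" where "fa a = Polynomial.monom 1 (a + b) - Polynomial.monom 1 a" for a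
  have efa: "poly (map_poly (of_int :: int \<Rightarrow> 'a::comm_ring_1) (fa a)) x = x ^ (a + b) - x ^ a" for a x
    unfolding fa_def by (rule ev_monom_diff)
  have efa1: "poly (map_poly (of_int :: int \<Rightarrow> 'a::comm_ring_1) (fa a + 1)) x = x ^ (a + b) - x ^ a + 1" for a x
    by (simp add: hom_distribs efa)
  have \<alpha>_eq: "\<alpha> a = \<theta> ^ a * (\<theta> ^ b - 1)" for a unfolding \<alpha>_def by (simp add: power_add algebra_simps)
  have \<alpha>2: "\<alpha> a \<ge> 2" for a
  proof -
    have "\<theta> ^ a \<ge> 1" using t1 by simp
    then have "\<theta> ^ a * (\<theta> ^ b - 1) \<ge> 1 * 2" using b2 by (intro mult_mono) auto
    then show ?thesis unfolding \<alpha>_eq by simp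
  qed
  have lensz: "Re (z ^ a - z ^ (a + b)) \<ge> 27/40 * cmod z ^ a \<and>
      cmod (z ^ a - z ^ (a + b)) \<le> 9/8 * cmod z ^ a \<and>
      cmod (z ^ a - z ^ (a + b)) < 1 \<and> cmod (1 - (z ^ a - z ^ (a + b))) < 1"
    if g: "good a" and z: "z \<in> R" for a z
  proof -
    have "z / complex_of_real (cmod z) \<in> U" using z unfolding U_def by auto
    then have "Re ((z / complex_of_real (cmod z)) ^ a) \<ge> 4/5" using g unfolding good_def by auto
    moreover have "cmod z ^ a \<le> 1/16" using M0 g z unfolding good_def by auto
    ultimately show ?thesis using lens[OF R0[OF z] b1[rule_format, OF z]] by blast
  qed
  have G1: "\<alpha> a \<in> pisot_set K \<and> \<alpha> a + 1 \<in> pisot_set K" if g: "good a" for a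
  proof
    show "\<alpha> a \<in> pisot_set K" unfolding gK[symmetric]
    proof (rule mem_pisot_set[OF irr mon p\<theta>])
      show "\<alpha> a = poly (map_poly of_int (fa a)) \<theta>" by (simp add: efa \<alpha>_def)
      show "\<alpha> a > 1" using \<alpha>2[of a] by simp
      fix z assume "poly (map_poly (of_int :: int \<Rightarrow> complex) p) z = 0" "z \<noteq> complex_of_real \<theta>"
      then have z: "z \<in> R" unfolding R_def by auto
      have "cmod (z ^ (a + b) - z ^ a) = cmod (z ^ a - z ^ (a + b))" by (rule norm_minus_commute)
      then show "cmod (poly (map_poly of_int (fa a)) z) < 1" using lensz[OF g z] by (simp add: efa)
    qed
    show "\<alpha> a + 1 \<in> pisot_set K" unfolding gK[symmetric]
    proof (rule mem_pisot_set[OF irr mon p\<theta>])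
      show "\<alpha> a + 1 = poly (map_poly of_int (fa a + 1)) \<theta>" by (simp add: efa1 \<alpha>_def)
      show "\<alpha> a + 1 > 1" using \<alpha>2[of a] by simp
      fix z assume "poly (map_poly (of_int :: int \<Rightarrow> complex) p) z = 0" "z \<noteq> complex_of_real \<theta>"
      then have z: "z \<in> R" unfolding R_def by auto
      have e: "poly (map_poly of_int (fa a + 1)) z = 1 - (z ^ a - z ^ (a + b))" by (simp add: efa1)
      from lensz[OF g z] have "cmod (1 - (z ^ a - z ^ (a + b))) < 1" by blast
      then show "cmod (poly (map_poly of_int (fa a + 1)) z) < 1" unfolding e .
    qed
  qed
  have DIR: "\<exists>a\<ge>M. good a" for M
  proof -
    obtain a where "a \<ge> max M M0" "\<forall>u\<in>U. Re (u ^ a) \<ge> 4/5"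
      using dirichlet_unit[OF finU U1] by blast
    then show ?thesis unfolding good_def by (intro exI[of _ a]) auto
  qed
  obtain a where ga: "good a" using DIR by blast
  have one: "1 \<in> diff_set K"
  proof -
    have "1 = (\<alpha> a + 1) - \<alpha> a" by simp
    then show ?thesis unfolding diff_set_def using G1[OF ga] by force
  qed
  have more: "\<forall>Y. \<exists>d \<in> diff_set K - pisot_set K. d > Y" if KQ: "K \<noteq> \<rat>"
  proof
    fix Y :: real
    have "R \<noteq> {}"
    proof
      assume Rempty: "R = {}"
      have "\<forall>z. poly (map_poly (of_int :: int \<Rightarrow> complex) p) z = 0 \<longrightarrow> z = complex_of_real \<theta>"
        using Rempty unfolding R_def by blast
      then have "{z. poly (map_poly (of_int :: int \<Rightarrow> complex) p) z = 0} = {complex_of_real \<theta>}"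
        using real_root_complex[OF p\<theta>] by blast
      moreover have "card {z. poly (map_poly (of_int :: int \<Rightarrow> complex) p) z = 0} = degree p"
        by (rule card_roots_int[OF irr mon])
      ultimately have d1: "degree p = 1" by simp
      have "poly (map_poly (of_int :: int \<Rightarrow> real) p) \<theta> =
          (\<Sum>i\<le>1. of_int (Polynomial.coeff p i) * \<theta> ^ i)"
        using d1 by (simp add: poly_altdef degree_map_poly coeff_map_poly)
      also have "\<dots> = of_int (Polynomial.coeff p 0) + \<theta>" using mon d1 by simp
      finally have "\<theta> = - of_int (Polynomial.coeff p 0)" using p\<theta> by simp
      then have "\<theta> \<in> \<rat>" by simp
      then have "K = \<rat>" using gK gen_field_rat by simp
      then show False using KQ by simp
    qed
    then obtain c0 where c0: "c0 \<in> R" by blast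
    obtain L where L: "cmod c0 ^ L \<le> 1/2"
      using small_power_exists[of "cmod c0" "1/2"] R1[OF c0] by auto
    obtain N3 where N3: "\<forall>n\<ge>N3. \<theta> ^ n \<ge> \<theta> ^ a + \<bar>Y\<bar> + 3" using big_power_exists[OF t1] by blast
    obtain a' where a': "a' \<ge> max N3 (a + L)" "good a'" using DIR by blast
    define d where "d = (\<alpha> a' + 1) - \<alpha> a"
    have ta: "\<theta> ^ a' \<ge> \<theta> ^ a + \<bar>Y\<bar> + 3" using N3 a' by auto
    have "d = (\<theta> ^ b - 1) * (\<theta> ^ a' - \<theta> ^ a) + 1" unfolding d_def \<alpha>_eq by (simp add: algebra_simps)
    moreover have "(\<theta> ^ b - 1) * (\<theta> ^ a' - \<theta> ^ a) \<ge> 1 * (\<bar>Y\<bar> + 3)"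
      using b2 ta by (intro mult_mono) auto
    ultimately have d3: "d \<ge> \<bar>Y\<bar> + 4" by simp
    have dD: "d \<in> diff_set K"
    proof -
      have "\<alpha> a' + 1 > \<alpha> a" using d3 unfolding d_def by simp
      then show ?thesis unfolding diff_set_def d_def using G1[OF ga] G1[OF a'(2)] by blast
    qed
    have dP: "d \<notin> pisot_set K"
    proof
      assume "d \<in> pisot_set K"
      then have pd: "pisot d" unfolding pisot_set_def by auto
      define g where "g = (fa a' + 1) - fa a"
      have eg: "poly (map_poly (of_int :: int \<Rightarrow> 'a::comm_ring_1) g) x = (x ^ (a' + b) - x ^ a' + 1) - (x ^ (a + b) - x ^ a)" for x
        unfolding g_def by (simp add: hom_distribs efa efa1[unfolded hom_distribs])
      have gd: "poly (map_poly of_int g) \<theta> = d" unfolding d_def \<alpha>_def eg by simp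
      have c0r: "poly (map_poly (of_int :: int \<Rightarrow> complex) p) c0 = 0" using c0 unfolding R_def by auto
      have alt: "poly (map_poly of_int g) c0 = complex_of_real d \<or> cmod (poly (map_poly of_int g) c0) < 1"
        using pisot_conj[OF irr mon p\<theta> _ c0r, of g] pd gd by simp
      define u where "u = c0 ^ a - c0 ^ (a + b)"
      define u' where "u' = c0 ^ a' - c0 ^ (a' + b)"
      have gc: "poly (map_poly of_int g) c0 = 1 + u - u'" unfolding eg u_def u'_def by simp
      define s where "s = cmod c0 ^ a"
      define s' where "s' = cmod c0 ^ a'"
      have s0: "s > 0" unfolding s_def using R0[OF c0] by simp
      have "s' \<le> cmod c0 ^ (a + L)" unfolding s'_def using a' R1[OF c0] by (intro power_decreasing) auto
      also have "\<dots> = s * cmod c0 ^ L" unfolding s_def by (simp add: power_add)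
      also have "\<dots> \<le> s * (1/2)" using L s0 by (intro mult_left_mono) auto
      finally have ss: "s' \<le> s / 2" by simp
      have l1: "Re u \<ge> 27/40 * s" "cmod u \<le> 9/8 * s" using lensz[OF ga c0] unfolding u_def s_def by auto
      have l2: "cmod u' \<le> 9/8 * s'" using lensz[OF a'(2) c0] unfolding u'_def s'_def by auto
      have s16: "s \<le> 1/16" using M0 ga c0 unfolding good_def s_def by auto
      have "Re u' \<le> cmod u'" using abs_Re_le_cmod[of u'] by linarith
      then have "Re (1 + u - u') > 1" using l1 l2 ss s0 by simp
      then have big: "cmod (1 + u - u') > 1" using abs_Re_le_cmod[of "1 + u - u'"] by linarith
      have "cmod (1 + u - u') \<le> 1 + cmod u + cmod u'"
        using norm_triangle_ineq4[of "1 + u" u'] norm_triangle_ineq[of 1 u] by simp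
      also have "\<dots> < 2" using l1 l2 ss s16 by simp
      finally have "cmod (1 + u - u') < d" using d3 by simp
      then have "1 + u - u' \<noteq> complex_of_real d" using d3 by auto
      then show False using alt big gc by auto
    qed
    have "d > Y" using d3 by simp
    then show "\<exists>d \<in> diff_set K - pisot_set K. d > Y" using dD dP by blast
  qed
  show ?thesis using one more by blast
qed


lemma rnf_subfield: "real_number_field K \<Longrightarrow> real_subfield K"
  unfolding real_number_field_def by simp

lemma alg_bound:
  assumes K: "real_number_field K"
  shows "\<exists>N. \<forall>x\<in>K. \<exists>P :: rat poly. lead_coeff P = 1 \<and> degree P = N \<and> poly (map_poly of_rat P) x = 0"
proof -
  obtain B where B: "finite B" "B \<subseteq> K" and span: "\<And>x. x \<in> K \<Longrightarrow> \<exists>c :: real \<Rightarrow> rat. x = (\<Sum>b\<in>B. of_rat (c b) * b)"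
    using K unfolding real_number_field_def by blast
  have F: "real_subfield K" using K by (rule rnf_subfield)
  obtain bs where bs: "set bs = B" "distinct bs" using finite_distinct_list[OF B(1)] by blast
  define N where "N = length bs"
  have bij: "bij_betw ((!) bs) {..<N} B" unfolding N_def using bs by (intro bij_betw_nth) auto
  have sumB: "(\<Sum>b\<in>B. f b) = (\<Sum>j<N. f (bs ! j))" for f :: "real \<Rightarrow> real"
    using sum.reindex_bij_betw[OF bij, of f] by simp
  have "\<exists>b\<in>B. b \<noteq> 0"
  proof (rule ccontr)
    assume "\<not> (\<exists>b\<in>B. b \<noteq> 0)"
    then have "(\<Sum>b\<in>B. of_rat (c b) * b) = 0" for c :: "real \<Rightarrow> rat" by (intro sum.neutral) auto
    moreover obtain c where "1 = (\<Sum>b\<in>B. of_rat (c b) * b)" using span[OF rsf_basic(2)[OF F]] by blast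
    ultimately show False by simp
  qed
  then obtain j0 where j0: "j0 < N" "bs ! j0 \<noteq> 0" using bs unfolding N_def by (metis in_set_conv_nth)
  show ?thesis
  proof (intro exI[of _ N] ballI)
    fix x assume x: "x \<in> K"
    have "\<forall>i<N. \<exists>c :: real \<Rightarrow> rat. x * bs ! i = (\<Sum>b\<in>B. of_rat (c b) * b)"
    proof (intro allI impI)
      fix i assume "i < N"
      then have "bs ! i \<in> K" using bs B unfolding N_def by auto
      then show "\<exists>c :: real \<Rightarrow> rat. x * bs ! i = (\<Sum>b\<in>B. of_rat (c b) * b)"
        using span rsf_basic(4)[OF F x] by blast
    qed
    then obtain C where C: "\<And>i. i < N \<Longrightarrow> x * bs ! i = (\<Sum>b\<in>B. of_rat (C i b) * b)" by metis
    define A :: "rat mat" where "A = mat N N (\<lambda>(i, j). C i (bs ! j))"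
    have A: "A \<in> carrier_mat N N" unfolding A_def by simp
    define Ar :: "real mat" where "Ar = map_mat of_rat A"
    have Ar: "Ar \<in> carrier_mat N N" unfolding Ar_def A_def by simp
    define v where "v = vec N (\<lambda>j. bs ! j)"
    have "eigenvector Ar v x" unfolding eigenvector_def
    proof (intro conjI)
      show "v \<in> carrier_vec (dim_row Ar)" using Ar unfolding v_def by simp
      show "v \<noteq> 0\<^sub>v (dim_row Ar)"
      proof
        assume "v = 0\<^sub>v (dim_row Ar)"
        then have "v $ j0 = 0" using Ar j0 by simp
        then show False using j0 unfolding v_def by simp
      qed
      show "Ar *\<^sub>v v = x \<cdot>\<^sub>v v"
      proof (rule eq_vecI)
        fix i assume "i < dim_vec (x \<cdot>\<^sub>v v)"
        then have i: "i < N" unfolding v_def by simp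
        have "(Ar *\<^sub>v v) $ i = (\<Sum>j<N. of_rat (C i (bs ! j)) * bs ! j)"
          using Ar i unfolding v_def Ar_def A_def
          by (simp add: scalar_prod_def lessThan_atLeast0 row_def)
        also have "\<dots> = x * bs ! i" using C[OF i] sumB by simp
        finally show "(Ar *\<^sub>v v) $ i = (x \<cdot>\<^sub>v v) $ i" using i unfolding v_def by simp
      qed (use Ar in \<open>simp add: v_def\<close>)
    qed
    then have "eigenvalue Ar x" unfolding eigenvalue_def by blast
    then have "poly (char_poly Ar) x = 0" using eigenvalue_root_char_poly[OF Ar] by simp
    moreover have "char_poly Ar = map_poly of_rat (char_poly A)"
      unfolding Ar_def by (rule of_rat_hom.char_poly_hom[OF A])
    moreover have "degree (char_poly A) = N \<and> lead_coeff (char_poly A) = 1"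
      using degree_monic_char_poly[OF A] by simp
    ultimately show "\<exists>P :: rat poly. lead_coeff P = 1 \<and> degree P = N \<and> poly (map_poly of_rat P) x = 0"
      by auto
  qed
qed

section \<open>Discreteness\<close>

lemma cr_rat: "complex_of_real (real_of_rat r) = of_rat r"
  by (cases r) (simp add: Fract_of_int_quotient of_rat_divide)

lemma coeff_prod_bound:
  fixes as :: "complex list"
  assumes "\<And>a. a \<in> set as \<Longrightarrow> cmod a \<le> T" "T \<ge> 1"
  shows "cmod (Polynomial.coeff (\<Prod>a\<leftarrow>as. [:-a, 1:]) i) \<le> (2 * T) ^ length as"
  using assms
proof (induction as arbitrary: i)
  case Nil then show ?case by (cases i) auto
next
  case (Cons a as)
  let ?q = "\<Prod>a\<leftarrow>as. [:-a, 1:]"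
  have IH: "cmod (Polynomial.coeff ?q j) \<le> (2 * T) ^ length as" for j using Cons by auto
  have aT: "cmod a \<le> T" using Cons by auto
  have "Polynomial.coeff ([:-a, 1:] * ?q) i = (if i = 0 then 0 else Polynomial.coeff ?q (i - 1)) - a * Polynomial.coeff ?q i"
    by (cases i) (auto simp: coeff_pCons algebra_simps)
  then have "cmod (Polynomial.coeff ([:-a, 1:] * ?q) i) \<le> (2 * T) ^ length as + T * (2 * T) ^ length as"
  proof -
    assume e: "Polynomial.coeff ([:-a, 1:] * ?q) i = (if i = 0 then 0 else Polynomial.coeff ?q (i - 1)) - a * Polynomial.coeff ?q i"
    have "cmod (if i = 0 then 0 else Polynomial.coeff ?q (i - 1)) \<le> (2 * T) ^ length as"
      using IH Cons.prems(2) by (cases "i = 0") auto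
    moreover have "cmod (a * Polynomial.coeff ?q i) \<le> T * (2 * T) ^ length as"
      unfolding norm_mult using aT IH Cons.prems(2) by (intro mult_mono) auto
    ultimately show ?thesis unfolding e using norm_triangle_ineq4 by (smt (verit))
  qed
  also have "\<dots> \<le> (2 * T) ^ length (a # as)"
  proof -
    have "(2 * T) ^ length as * (1 + T) \<le> (2 * T) ^ length as * (2 * T)"
      using Cons.prems(2) by (intro mult_left_mono) auto
    then show ?thesis by (simp add: algebra_simps)
  qed
  finally show ?case by simp
qed

lemma int_poly_coeff_bound:
  fixes p :: "int poly" and T :: real
  assumes mon: "lead_coeff p = 1" and T: "T \<ge> 1"
    and roots: "\<And>z. poly (map_poly (of_int :: int \<Rightarrow> complex) p) z = 0 \<Longrightarrow> cmod z \<le> T"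
  shows "\<bar>Polynomial.coeff p i\<bar> \<le> (2 * T) ^ degree p"
proof -
  let ?pc = "map_poly (of_int :: int \<Rightarrow> complex) p"
  obtain as where as: "Polynomial.smult (lead_coeff ?pc) (\<Prod>a\<leftarrow>as. [:- a, 1:]) = ?pc" "length as = degree ?pc"
    using fundamental_theorem_algebra_factorized[of ?pc] by blast
  have lc: "lead_coeff ?pc = 1" using mon by (simp add: degree_map_poly)
  have pc: "?pc = (\<Prod>a\<leftarrow>as. [:- a, 1:])" using as(1) lc by simp
  have "cmod a \<le> T" if "a \<in> set as" for a
    using roots[of a] pc linear_poly_root[OF that] by simp
  then have "cmod (Polynomial.coeff ?pc i) \<le> (2 * T) ^ length as"
    unfolding pc by (intro coeff_prod_bound T) auto
  then show ?thesis using as(2) by (simp add: coeff_map_poly degree_map_poly)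
qed

lemma finite_bounded_int_polys:
  "finite {p :: int poly. degree p \<le> N \<and> (\<forall>i. \<bar>Polynomial.coeff p i\<bar> \<le> Bd)}"
proof -
  let ?S = "{p :: int poly. degree p \<le> N \<and> (\<forall>i. \<bar>Polynomial.coeff p i\<bar> \<le> Bd)}"
  define h where "h p = restrict (Polynomial.coeff p) {..N}" for p :: "int poly"
  have "h p \<in> PiE {..N} (\<lambda>_. {-Bd..Bd})" if p: "p \<in> ?S" for p
  proof -
    have "- Bd \<le> Polynomial.coeff p i \<and> Polynomial.coeff p i \<le> Bd" for i
    proof -
      have "\<bar>Polynomial.coeff p i\<bar> \<le> Bd" using p by blast
      then show ?thesis by arith
    qed
    then have "Polynomial.coeff p i \<in> {-Bd..Bd}" for i by simp
    then show ?thesis unfolding h_def by (simp add: restrict_PiE_iff)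
  qed
  then have "h ` ?S \<subseteq> PiE {..N} (\<lambda>_. {-Bd..Bd})" by blast
  moreover have "finite (PiE {..N} (\<lambda>_. {-Bd..Bd}))" by (intro finite_PiE) auto
  ultimately have "finite (h ` ?S)" by (rule finite_subset)
  moreover have "inj_on h ?S"
  proof (rule inj_onI)
    fix p q assume p: "p \<in> ?S" and q: "q \<in> ?S" and e: "h p = h q"
    show "p = q"
    proof (rule poly_eqI)
      fix i show "Polynomial.coeff p i = Polynomial.coeff q i"
      proof (cases "i \<le> N")
        case True then show ?thesis using fun_cong[OF e, of i] unfolding h_def by simp
      next
        case False then show ?thesis using p q by (auto simp: coeff_eq_0)
      qed
    qed
  qed
  ultimately show ?thesis by (rule finite_imageD)
qed

lemma pisot_deg_bound:
  assumes K: "real_number_field K"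
  shows "\<exists>N. \<forall>x\<in>pisot_set K. \<forall>p :: int poly. irreducible p \<longrightarrow> lead_coeff p = 1 \<longrightarrow>
           poly (map_poly of_int p) x = 0 \<longrightarrow> degree p \<le> N"
proof -
  obtain N where N: "\<And>x. x \<in> K \<Longrightarrow> \<exists>P :: rat poly. lead_coeff P = 1 \<and> degree P = N \<and> poly (map_poly of_rat P) x = 0"
    using alg_bound[OF K] by blast
  have "degree p \<le> N" if x: "x \<in> pisot_set K" and irr: "irreducible p" and mon: "lead_coeff p = 1"
    and px: "poly (map_poly (of_int :: int \<Rightarrow> real) p) x = 0" for x p
  proof -
    have xK: "x \<in> K" using x unfolding pisot_set_def by auto
    obtain P :: "rat poly" where P: "lead_coeff P = 1" "degree P = N" "poly (map_poly of_rat P) x = 0"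
      using N[OF xK] by blast
    have "poly (map_poly (of_rat :: rat \<Rightarrow> complex) P) (complex_of_real x) = 0"
    proof -
      have "map_poly (of_rat :: rat \<Rightarrow> complex) P = map_poly complex_of_real (map_poly of_rat P)"
        by (subst map_poly_map_poly) (auto simp: o_def cr_rat)
      then show ?thesis using P(3) by (simp add: of_real_hom.poly_map_poly)
    qed
    moreover have "poly (map_poly (of_rat :: rat \<Rightarrow> complex) (map_poly rat_of_int p)) (complex_of_real x) = 0"
      using real_root_complex[OF px] by (simp add: of_rat_of_int_poly)
    ultimately have "map_poly rat_of_int p dvd P"
      using irreducible_rat_dvd_of_root[OF monic_irreducible_int_rat(1)[OF irr mon]] by blast
    moreover have "P \<noteq> 0" using P by auto
    ultimately have "degree (map_poly rat_of_int p) \<le> degree P" by (rule dvd_imp_degree_le)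
    then show ?thesis using P by (simp add: degree_map_poly)
  qed
  then show ?thesis by blast
qed

lemma pisot_set_finite_below:
  assumes K: "real_number_field K"
  shows "finite (pisot_set K \<inter> {..<T})"
proof -
  obtain N where N: "\<And>x p. x \<in> pisot_set K \<Longrightarrow> irreducible p \<Longrightarrow> lead_coeff p = 1 \<Longrightarrow>
           poly (map_poly (of_int :: int \<Rightarrow> real) p) x = 0 \<Longrightarrow> degree p \<le> N"
    using pisot_deg_bound[OF K] by blast
  define T1 where "T1 = max T 1"
  define Bd where "Bd = \<lceil>(2 * T1) ^ N\<rceil>"
  define S where "S = {p :: int poly. degree p \<le> N \<and> (\<forall>i. \<bar>Polynomial.coeff p i\<bar> \<le> Bd)}"
  have finS: "finite S" unfolding S_def by (rule finite_bounded_int_polys)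
  have sub: "pisot_set K \<inter> {..<T} \<subseteq> (\<Union>p\<in>S \<inter> {p. lead_coeff p = 1}. {x. poly (map_poly (of_int :: int \<Rightarrow> real) p) x = 0})"
  proof
    fix x assume x: "x \<in> pisot_set K \<inter> {..<T}"
    obtain p where p: "lead_coeff p = 1" "irreducible p" "poly (map_poly (of_int :: int \<Rightarrow> real) p) x = 0"
      "\<And>z. poly (map_poly (of_int :: int \<Rightarrow> complex) p) z = 0 \<Longrightarrow> z \<noteq> complex_of_real x \<Longrightarrow> cmod z < 1"
      and x1: "x > 1"
      using x unfolding pisot_set_def pisot_def by blast
    have dp: "degree p \<le> N" using N[OF _ p(2,1,3)] x by blast
    have T1x: "x \<le> T1" using x unfolding T1_def by auto
    have rb: "cmod z \<le> T1" if "poly (map_poly (of_int :: int \<Rightarrow> complex) p) z = 0" for z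
    proof (cases "z = complex_of_real x")
      case True then show ?thesis using T1x x1 by simp
    next
      case False then show ?thesis using p(4)[OF that] unfolding T1_def by simp
    qed
    have "\<bar>Polynomial.coeff p i\<bar> \<le> Bd" for i
    proof -
      have "real_of_int \<bar>Polynomial.coeff p i\<bar> \<le> (2 * T1) ^ degree p"
        using int_poly_coeff_bound[OF p(1) _ rb, of i] unfolding T1_def by simp
      also have "\<dots> \<le> (2 * T1) ^ N" using dp unfolding T1_def by (intro power_increasing) auto
      also have "\<dots> \<le> Bd" unfolding Bd_def by simp
      finally show ?thesis by linarith
    qed
    then have "p \<in> S \<inter> {p. lead_coeff p = 1}" unfolding S_def using dp p(1) by simp
    then show "x \<in> (\<Union>p\<in>S \<inter> {p. lead_coeff p = 1}. {x. poly (map_poly (of_int :: int \<Rightarrow> real) p) x = 0})"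
      using p(3) by blast
  qed
  have "finite (\<Union>p\<in>S \<inter> {p. lead_coeff p = 1}. {x. poly (map_poly (of_int :: int \<Rightarrow> real) p) x = 0})"
  proof (rule finite_UN_I)
    show "finite (S \<inter> {p. lead_coeff p = 1})" using finS by simp
    fix p assume "p \<in> S \<inter> {p. lead_coeff p = 1}"
    then have "map_poly (of_int :: int \<Rightarrow> real) p \<noteq> 0" by auto
    then show "finite {x. poly (map_poly (of_int :: int \<Rightarrow> real) p) x = 0}" by (rule poly_roots_finite)
  qed
  then show ?thesis using sub by (rule finite_subset[rotated])
qed

section \<open>Gaps\<close>

lemma chain_gaps:
  assumes K: "real_number_field K" and G: "gap_set K \<subseteq> {d}"
  shows "\<alpha> \<in> pisot_set K \<Longrightarrow> \<beta> \<in> pisot_set K \<Longrightarrow> \<alpha> < \<beta> \<Longrightarrow> \<exists>k::nat. k \<ge> 1 \<and> \<beta> - \<alpha> = real k * d"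
proof (induction "card (pisot_set K \<inter> {\<alpha><..<\<beta>})" arbitrary: \<alpha> rule: less_induct)
  case less
  define S where "S = pisot_set K \<inter> {\<alpha><..<\<beta>}"
  have finS: "finite S" unfolding S_def
    by (rule finite_subset[OF _ pisot_set_finite_below[OF K, of \<beta>]]) auto
  show ?case
  proof (cases "S = {}")
    case True
    then have nb: "\<not> (\<exists>y\<in>pisot_set K. \<alpha> < y \<and> y < \<beta>)" unfolding S_def by auto
    have "\<beta> - \<alpha> \<in> gap_set K" unfolding gap_set_def
      by (rule CollectI, rule exI[of _ \<alpha>], rule exI[of _ \<beta>]) (use less.prems nb in auto)
    then have "\<beta> - \<alpha> = d" using G by auto
    then show ?thesis by (intro exI[of _ 1]) auto
  next
    case False
    define \<gamma> where "\<gamma> = Min S"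
    have gS: "\<gamma> \<in> S" unfolding \<gamma>_def using finS False by simp
    have gmin: "\<And>y. y \<in> S \<Longrightarrow> \<gamma> \<le> y" unfolding \<gamma>_def using finS by simp
    have g: "\<gamma> \<in> pisot_set K" "\<alpha> < \<gamma>" "\<gamma> < \<beta>" using gS unfolding S_def by auto
    have "\<gamma> - \<alpha> \<in> gap_set K"
    proof -
      have "\<not> (\<exists>y\<in>pisot_set K. \<alpha> < y \<and> y < \<gamma>)"
      proof
        assume "\<exists>y\<in>pisot_set K. \<alpha> < y \<and> y < \<gamma>"
        then obtain y where y: "y \<in> pisot_set K" "\<alpha> < y" "y < \<gamma>" by blast
        then have "y \<in> S" using g unfolding S_def by auto
        then show False using gmin y by force
      qed
      then show ?thesis unfolding gap_set_def
        by (intro CollectI exI[of _ \<alpha>] exI[of _ \<gamma>]) (use less.prems g in auto)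
    qed
    then have gd: "\<gamma> - \<alpha> = d" using G by auto
    have "pisot_set K \<inter> {\<gamma><..<\<beta>} \<subset> S" unfolding S_def using g gS unfolding S_def by auto
    then have "card (pisot_set K \<inter> {\<gamma><..<\<beta>}) < card S" by (rule psubset_card_mono[OF finS])
    then obtain k :: nat where k: "k \<ge> 1" "\<beta> - \<gamma> = real k * d"
      using less.hyps[of \<gamma>] g less.prems(2) unfolding S_def by blast
    have "\<beta> - \<alpha> = real (Suc k) * d" using k gd by (simp add: algebra_simps)
    then show ?thesis by (intro exI[of _ "Suc k"]) auto
  qed
qed

lemma two_gaps:
  assumes K: "real_number_field K" and KQ: "K \<noteq> \<rat>"
    and one: "1 \<in> diff_set K" and th: "\<theta> \<in> pisot_set K" and thD: "\<theta> \<in> diff_set K"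
  shows "\<exists>a\<in>gap_set K. \<exists>b\<in>gap_set K. a \<noteq> b"
proof (rule ccontr)
  assume "\<not> (\<exists>a\<in>gap_set K. \<exists>b\<in>gap_set K. a \<noteq> b)"
  then obtain d where G: "gap_set K \<subseteq> {d}" by blast
  obtain a1 b1 where ab1: "1 = b1 - a1" "b1 \<in> pisot_set K" "a1 \<in> pisot_set K" "b1 > a1"
    using one unfolding diff_set_def by blast
  obtain a2 b2 where ab2: "\<theta> = b2 - a2" "b2 \<in> pisot_set K" "a2 \<in> pisot_set K" "b2 > a2"
    using thD unfolding diff_set_def by blast
  obtain k1 :: nat where k1: "k1 \<ge> 1" "b1 - a1 = real k1 * d" using chain_gaps[OF K G ab1(3,2,4)] by blast
  obtain k2 :: nat where k2: "b2 - a2 = real k2 * d" using chain_gaps[OF K G ab2(3,2,4)] by blast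
  have "d = 1 / real k1" using k1 ab1(1) by (simp add: field_simps)
  then have "\<theta> = real k2 / real k1" using k2 ab2(1) by simp
  then have "\<theta> \<in> \<rat>" by simp
  then have "gen_field \<theta> = \<rat>" by (rule gen_field_rat)
  moreover have "gen_field \<theta> = K" using th unfolding pisot_set_def by auto
  ultimately show False using KQ by simp
qed


lemma vanish_all:
  fixes p f :: "int poly"
  assumes irr: "irreducible p" and mon: "lead_coeff p = 1" and deg: "degree f < degree p"
    and z: "poly (map_poly (of_int :: int \<Rightarrow> complex) p) z = 0"
    and fz: "poly (map_poly (of_int :: int \<Rightarrow> complex) f) z = 0"
  shows "f = 0"
proof (rule ccontr)
  assume f0: "f \<noteq> 0"
  let ?fc = "map_poly (of_int :: int \<Rightarrow> complex) f"
  have "{w. poly (map_poly (of_int :: int \<Rightarrow> complex) p) w = 0} \<subseteq> {w. poly ?fc w = 0}"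
    using int_poly_min[OF irr mon z fz] by blast
  moreover have "?fc \<noteq> 0" using f0 by simp
  ultimately have "card {w. poly (map_poly (of_int :: int \<Rightarrow> complex) p) w = 0} \<le> card {w. poly ?fc w = 0}"
    by (intro card_mono poly_roots_finite)
  also have "\<dots> \<le> degree ?fc" using \<open>?fc \<noteq> 0\<close> by (rule card_poly_roots_bound)
  finally show False using card_roots_int[OF irr mon] deg by (simp add: degree_map_poly)
qed

lemma cnj_ipoly: "poly (map_poly (of_int :: int \<Rightarrow> complex) p) (cnj z) = cnj (poly (map_poly of_int p) z)"
proof -
  have "map_poly cnj (map_poly (of_int :: int \<Rightarrow> complex) p) = map_poly of_int p"
    by (subst map_poly_map_poly) (auto simp: o_def)
  then show ?thesis using poly_map_poly_cnj[of "map_poly (of_int :: int \<Rightarrow> complex) p" "cnj z"] by simp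
qed

lemma prod_small:
  fixes ws :: "complex list"
  assumes "\<And>w. w \<in> set ws \<Longrightarrow> cmod w < 1" "ws \<noteq> []"
  shows "cmod (\<Prod>w\<leftarrow>ws. - w) < 1"
  using assms
proof (induction ws)
  case Nil then show ?case by simp
next
  case (Cons w ws)
  have w: "cmod w < 1" using Cons by auto
  show ?case
  proof (cases "ws = []")
    case True then show ?thesis using w by simp
  next
    case False
    then have P: "cmod (\<Prod>w\<leftarrow>ws. - w) < 1" using Cons by auto
    have "cmod (- w) * cmod (\<Prod>w\<leftarrow>ws. - w) < 1 * 1"
      using w P norm_ge_zero[of "\<Prod>w\<leftarrow>ws. - w"] norm_ge_zero[of "- w"] norm_minus_cancel[of w]
      by (intro mult_strict_mono') (simp_all only:)
    moreover have "(\<Prod>x\<leftarrow>w # ws. - x) = (- w) * (\<Prod>x\<leftarrow>ws. - x)" by simp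
    ultimately show ?thesis by (metis norm_mult mult_1)
  qed
qed

lemma f_theta_ge1:
  fixes p f :: "int poly"
  assumes irr: "irreducible p" and mon: "lead_coeff p = 1"
    and p\<theta>: "poly (map_poly (of_int :: int \<Rightarrow> real) p) \<theta> = 0"
    and f0: "f \<noteq> 0" and deg: "degree f < degree p"
    and sm: "\<And>z. poly (map_poly (of_int :: int \<Rightarrow> complex) p) z = 0 \<Longrightarrow> z \<noteq> complex_of_real \<theta> \<Longrightarrow>
               cmod (poly (map_poly of_int f) z) < 1"
  shows "\<bar>poly (map_poly of_int f) \<theta>\<bar> \<ge> 1"
proof (rule ccontr)
  assume "\<not> \<bar>poly (map_poly of_int f) \<theta>\<bar> \<ge> 1"
  then have ft: "\<bar>poly (map_poly of_int f) \<theta>\<bar> < 1" by simp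
  obtain q :: "int poly" where q1: "lead_coeff q = 1"
    and q2: "\<And>z. poly (map_poly (of_int :: int \<Rightarrow> complex) p) z = 0 \<Longrightarrow>
          poly (map_poly of_int q) (poly (map_poly of_int f) z) = 0"
    and q3: "\<And>w. poly (map_poly (of_int :: int \<Rightarrow> complex) q) w = 0 \<Longrightarrow>
          (\<exists>z. poly (map_poly of_int p) z = 0 \<and> w = poly (map_poly of_int f) z)"
    using integrality[OF irr mon, of f] by blast
  have allsmall: "cmod (poly (map_poly of_int f) z) < 1" if "poly (map_poly (of_int :: int \<Rightarrow> complex) p) z = 0" for z
  proof (cases "z = complex_of_real \<theta>")
    case True
    then show ?thesis using ft by (simp add: ipoly_complex_of_real)
  next
    case False then show ?thesis using sm that by blast
  qed
  let ?qc = "map_poly (of_int :: int \<Rightarrow> complex) q"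
  obtain ws where ws: "Polynomial.smult (lead_coeff ?qc) (\<Prod>a\<leftarrow>ws. [:- a, 1:]) = ?qc" "length ws = degree ?qc"
    using fundamental_theorem_algebra_factorized[of ?qc] by blast
  have lc: "lead_coeff ?qc = 1" using q1 by (simp add: degree_map_poly)
  have qc: "?qc = (\<Prod>a\<leftarrow>ws. [:- a, 1:])" using ws(1) lc by simp
  have wsmall: "cmod w < 1" if "w \<in> set ws" for w
  proof -
    have "poly ?qc w = 0" unfolding qc using linear_poly_root[OF that] .
    then obtain z where "poly (map_poly of_int p) z = 0" "w = poly (map_poly of_int f) z" using q3 by blast
    then show ?thesis using allsmall by blast
  qed
  have "ws \<noteq> []"
  proof
    assume "ws = []"
    then have "?qc = 1" using qc by simp
    then show False using q2[OF real_root_complex[OF p\<theta>]] by simp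
  qed
  then have "cmod (\<Prod>w\<leftarrow>ws. - w) < 1" using prod_small wsmall by blast
  moreover have "poly ?qc 0 = (\<Prod>w\<leftarrow>ws. - w)" unfolding qc by (simp add: poly_prod_list o_def)
  moreover have "poly ?qc 0 = of_int (Polynomial.coeff q 0)" by (simp add: poly_0_coeff_0 coeff_map_poly)
  ultimately have "cmod (of_int (Polynomial.coeff q 0) :: complex) < 1" by metis
  then have "\<bar>real_of_int (Polynomial.coeff q 0)\<bar> < 1" by (metis norm_of_int)
  then have "\<bar>Polynomial.coeff q 0\<bar> < 1" by linarith
  then have "Polynomial.coeff q 0 = 0" by simp
  then have "poly ?qc 0 = 0" by (simp add: poly_0_coeff_0 coeff_map_poly)
  then obtain z where z: "poly (map_poly (of_int :: int \<Rightarrow> complex) p) z = 0" "0 = poly (map_poly of_int f) z"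
    using q3 by blast
  then have "f = 0" using vanish_all[OF irr mon deg z(1)] by simp
  then show False using f0 by simp
qed


lemma card_pow_ineq:
  fixes D0 :: real and Nb n :: nat and Lb :: int
  assumes n: "n \<ge> 1" and D0: "D0 \<ge> 1" and Nb: "real Nb \<ge> D0 ^ (n - 1)" "Nb \<ge> 1"
    and Lb: "real_of_int (2 * Lb + 1) \<le> D0 * real Nb" "Lb \<ge> 0"
  shows "nat (2 * Lb + 1) ^ (n - 1) < (Nb + 1) ^ n"
proof -
  have "real (nat (2 * Lb + 1) ^ (n - 1)) = real_of_int (2 * Lb + 1) ^ (n - 1)" using Lb(2) by simp
  also have "\<dots> \<le> (D0 * real Nb) ^ (n - 1)" using Lb by (intro power_mono) auto
  also have "\<dots> = D0 ^ (n - 1) * real Nb ^ (n - 1)" by (simp add: power_mult_distrib)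
  also have "\<dots> \<le> real Nb * real Nb ^ (n - 1)" using Nb by (intro mult_right_mono) auto
  also have "\<dots> = real Nb ^ n" using n by (cases n) auto
  also have "\<dots> < (real Nb + 1) ^ n" using n by (intro power_strict_mono) auto
  also have "\<dots> = real ((Nb + 1) ^ n)" by (simp add: add.commute)
  finally show ?thesis by linarith
qed

lemma pisot_exists_from_generator:
  fixes p :: "int poly" and \<theta> :: real
  assumes irr: "irreducible p" and mon: "lead_coeff p = 1"
    and p\<theta>: "poly (map_poly (of_int :: int \<Rightarrow> real) p) \<theta> = 0"
  shows "\<exists>\<alpha>. \<alpha> \<in> pisot_set (gen_field \<theta>)"
proof -
  define n where "n = degree p"
  have n1: "n \<ge> 1" using monic_irreducible_int_rat(2)[OF irr mon] unfolding n_def by simp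
  let ?pc = "map_poly (of_int :: int \<Rightarrow> complex) p"
  define Rt where "Rt = {z. poly ?pc z = 0}"
  have finRt: "finite Rt" unfolding Rt_def using mon by (intro poly_roots_finite) auto
  have cRt: "card Rt = n" unfolding Rt_def n_def by (rule card_roots_int[OF irr mon])
  have thR: "complex_of_real \<theta> \<in> Rt" unfolding Rt_def using real_root_complex[OF p\<theta>] by simp
  define R where "R = Rt - {complex_of_real \<theta>}"
  have finR: "finite R" unfolding R_def using finRt by simp
  have cR: "card R = n - 1" unfolding R_def using cRt thR finRt by (simp add: card_Diff_singleton)
  have Rroot: "poly ?pc z = 0" if "z \<in> R" for z using that unfolding R_def Rt_def by auto
  define Rr where "Rr = {z\<in>R. Im z = 0}"
  define Ru where "Ru = {z\<in>R. Im z > 0}"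
  define Rl where "Rl = {z\<in>R. Im z < 0}"
  have cnjR: "cnj z \<in> R" if "z \<in> R" "Im z \<noteq> 0" for z
  proof -
    have "poly ?pc (cnj z) = 0" using Rroot[OF that(1)] by (simp add: cnj_ipoly)
    moreover have "cnj z \<noteq> complex_of_real \<theta>" using that(2) by (auto simp: complex_eq_iff)
    ultimately show ?thesis unfolding R_def Rt_def by auto
  qed
  have bij: "bij_betw cnj Ru Rl"
  proof (rule bij_betwI[of cnj _ _ cnj])
    show "cnj \<in> Ru \<rightarrow> Rl" unfolding Ru_def Rl_def using cnjR by auto
    show "cnj \<in> Rl \<rightarrow> Ru" unfolding Ru_def Rl_def using cnjR by auto
  qed auto
  have cRl: "card Rl = card Ru" using bij_betw_same_card[OF bij] by simp
  have "R = Rr \<union> (Ru \<union> Rl)" unfolding Rr_def Ru_def Rl_def by auto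
  moreover have "card (Rr \<union> (Ru \<union> Rl)) = card Rr + (card Ru + card Rl)"
    using finR unfolding Rr_def Ru_def Rl_def by (subst card_Un_disjoint, auto)+
  ultimately have cR2: "card Rr + 2 * card Ru = n - 1" using cR cRl by simp
  define I where "I = Rr \<times> {0::nat} \<union> Ru \<times> {0, 1}"
  have finI: "finite I" unfolding I_def Rr_def Ru_def using finR by auto
  have cI: "card I = n - 1"
  proof -
    have "card I = card (Rr \<times> {0::nat}) + card (Ru \<times> {0::nat, 1})"
      unfolding I_def using finR unfolding Rr_def Ru_def by (intro card_Un_disjoint) auto
    also have "\<dots> = card Rr + 2 * card Ru" by (simp add: card_cartesian_product)
    finally show ?thesis using cR2 by simp
  qed
  define val where "val c z = (\<Sum>j<n. of_int (c j) * z ^ j)" for c :: "nat \<Rightarrow> int" and z :: complex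
  define lf where "lf i c = (if snd i = 0 then Re (val c (fst i)) else Im (val c (fst i)))"
    for i :: "complex \<times> nat" and c
  define C where "C = 1 + (\<Sum>z\<in>R. \<Sum>j<n. cmod z ^ j)"
  have C1: "C \<ge> 1" unfolding C_def by (simp add: sum_nonneg)
  have Cz: "(\<Sum>j<n. cmod z ^ j) \<le> C" if "z \<in> R" for z
  proof -
    have "(\<Sum>j<n. cmod z ^ j) \<le> (\<Sum>z\<in>R. \<Sum>j<n. cmod z ^ j)"
      using finR that by (intro member_le_sum) (auto intro: sum_nonneg)
    then show ?thesis unfolding C_def by simp
  qed
  define D0 where "D0 = 16 * C + 5"
  define Nb :: nat where "Nb = nat \<lceil>D0 ^ (n - 1)\<rceil> + 1"
  have Nb: "real Nb \<ge> D0 ^ (n - 1)" "Nb \<ge> 1" unfolding Nb_def by (auto, linarith)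
  define Lb :: int where "Lb = \<lceil>8 * real Nb * C\<rceil> + 1"
  have "8 * real Nb * C \<ge> 0" using C1 by simp
  then have Lb0: "Lb \<ge> 0" unfolding Lb_def by linarith
  have Lb1: "real_of_int (2 * Lb + 1) \<le> D0 * real Nb"
  proof -
    have "real_of_int Lb \<le> 8 * real Nb * C + 2" unfolding Lb_def by linarith
    then have "real_of_int (2 * Lb + 1) \<le> 16 * real Nb * C + 5" by simp
    also have "\<dots> \<le> 16 * real Nb * C + 5 * real Nb" using Nb by simp
    finally show ?thesis unfolding D0_def by (simp add: algebra_simps)
  qed
  define A where "A = PiE {..<n} (\<lambda>_. {0..int Nb})"
  define Cod where "Cod = PiE I (\<lambda>_. {-Lb..Lb})"
  define h where "h c = restrict (\<lambda>i. \<lfloor>8 * lf i c\<rfloor>) I" for c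
  have valb: "cmod (val c z) \<le> real Nb * C" if c: "c \<in> A" and z: "z \<in> R" for c z
  proof -
    have "cmod (val c z) \<le> (\<Sum>j<n. cmod (of_int (c j) * z ^ j))" unfolding val_def by (rule norm_sum)
    also have "\<dots> \<le> (\<Sum>j<n. real Nb * cmod z ^ j)"
    proof (intro sum_mono)
      fix j assume "j \<in> {..<n}"
      then have "c j \<in> {0..int Nb}" using c unfolding A_def by (rule PiE_mem[rotated])
      then have "cmod (of_int (c j) :: complex) \<le> real Nb" by (simp add: norm_of_int)
      then show "cmod (of_int (c j) * z ^ j) \<le> real Nb * cmod z ^ j"
        by (simp add: norm_mult norm_power mult_right_mono)
    qed
    also have "\<dots> = real Nb * (\<Sum>j<n. cmod z ^ j)" by (simp add: sum_distrib_left)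
    also have "\<dots> \<le> real Nb * C" using Cz[OF z] by (intro mult_left_mono) auto
    finally show ?thesis .
  qed
  have hC: "h c \<in> Cod" if c: "c \<in> A" for c
  proof -
    have "\<lfloor>8 * lf i c\<rfloor> \<in> {-Lb..Lb}" if i: "i \<in> I" for i
    proof -
      have zR: "fst i \<in> R" using i unfolding I_def Rr_def Ru_def by auto
      have "\<bar>lf i c\<bar> \<le> cmod (val c (fst i))" unfolding lf_def by (auto simp: abs_Re_le_cmod abs_Im_le_cmod)
      then have "\<bar>lf i c\<bar> \<le> real Nb * C" using valb[OF c zR] by simp
      then have "- (8 * real Nb * C) \<le> 8 * lf i c" "8 * lf i c \<le> 8 * real Nb * C" by arith+
      then show ?thesis unfolding Lb_def by (simp, linarith)
    qed
    then show ?thesis unfolding h_def Cod_def by (simp add: restrict_PiE_iff)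
  qed
  have "card (h ` A) \<le> card Cod"
    using hC finI unfolding Cod_def by (intro card_mono finite_PiE) auto
  also have "card Cod = nat (2 * Lb + 1) ^ (n - 1)"
    unfolding Cod_def using finI cI by (simp add: card_PiE)
  also have "\<dots> < (Nb + 1) ^ n"
    by (rule card_pow_ineq[OF n1 _ Nb Lb1 Lb0]) (use C1 in \<open>simp add: D0_def\<close>)
  also have "\<dots> = card A"
  proof -
    have "nat (int Nb + 1) = Nb + 1" by simp
    then show ?thesis unfolding A_def by (simp add: card_PiE)
  qed
  finally have "\<not> inj_on h A" by (rule pigeonhole)
  then obtain c c' where cc: "c \<in> A" "c' \<in> A" "c \<noteq> c'" "h c = h c'" unfolding inj_on_def by blast
  define f :: "int poly" where "f = (\<Sum>j<n. Polynomial.monom (c j - c' j) j)"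
  have cf: "Polynomial.coeff f j = (if j < n then c j - c' j else 0)" for j
    unfolding f_def by (simp add: coeff_sum coeff_monom)
  have f0: "f \<noteq> 0"
  proof
    assume "f = 0"
    then have "c j = c' j" if "j \<in> {..<n}" for j using cf[of j] that by simp
    then have "c = c'" using cc(1,2) unfolding A_def by (intro PiE_ext) auto
    then show False using cc(3) by simp
  qed
  have degf: "degree f < n"
  proof -
    have "degree f \<le> n - 1" by (rule degree_le) (auto simp: cf)
    then show ?thesis using n1 by simp
  qed
  have fval: "poly (map_poly (of_int :: int \<Rightarrow> complex) f) z = val c z - val c' z" for z
    unfolding f_def val_def
    by (simp add: hom_distribs poly_sum poly_monom map_poly_monom sum_subtractf algebra_simps)
  have close: "\<bar>lf i c - lf i c'\<bar> < 1/8" if i: "i \<in> I" for i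
  proof -
    have "\<lfloor>8 * lf i c\<rfloor> = \<lfloor>8 * lf i c'\<rfloor>" using fun_cong[OF cc(4), of i] i unfolding h_def by simp
    then have "\<bar>8 * lf i c - 8 * lf i c'\<bar> < 1" by (rule floor_eq_diff)
    then show ?thesis by arith
  qed
  have small_u: "cmod (poly (map_poly of_int f) z) < 1/4" if z: "z \<in> R" "Im z \<ge> 0" for z
  proof (cases "Im z = 0")
    case True
    then have "z \<in> Rr" using z unfolding Rr_def by auto
    then have "(z, 0) \<in> I" unfolding I_def by auto
    then have re: "\<bar>Re (val c z) - Re (val c' z)\<bar> < 1/8" using close unfolding lf_def by force
    have zr: "z = complex_of_real (Re z)" using True by (simp add: complex_eq_iff)
    have "Im (poly (map_poly (of_int :: int \<Rightarrow> complex) f) z) = 0"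
      by (subst zr) (simp add: ipoly_complex_of_real)
    then have "cmod (poly (map_poly of_int f) z) = \<bar>Re (poly (map_poly of_int f) z)\<bar>" by (rule cmod_eq_Re)
    then show ?thesis using re fval by simp
  next
    case False
    then have "z \<in> Ru" using z unfolding Ru_def by auto
    then have "(z, 0) \<in> I" "(z, 1) \<in> I" unfolding I_def by auto
    then have "\<bar>Re (val c z) - Re (val c' z)\<bar> < 1/8" "\<bar>Im (val c z) - Im (val c' z)\<bar> < 1/8"
      using close unfolding lf_def by force+
    then show ?thesis using cmod_le[of "val c z - val c' z"] fval by simp
  qed
  have small: "cmod (poly (map_poly of_int f) z) < 1/4" if z: "z \<in> R" for z
  proof (cases "Im z \<ge> 0")
    case True then show ?thesis using small_u z by blast
  next
    case False
    then have "cnj z \<in> R" "Im (cnj z) \<ge> 0" using cnjR[OF z] by auto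
    then have "cmod (poly (map_poly of_int f) (cnj z)) < 1/4" by (rule small_u)
    then show ?thesis by (simp add: cnj_ipoly)
  qed
  have sm1: "cmod (poly (map_poly of_int f) z) < 1" if "poly ?pc z = 0" "z \<noteq> complex_of_real \<theta>" for z
  proof -
    have "z \<in> R" using that unfolding R_def Rt_def by auto
    then show ?thesis using small by fastforce
  qed
  have fth: "\<bar>poly (map_poly of_int f) \<theta>\<bar> \<ge> 1"
    by (rule f_theta_ge1[OF irr mon p\<theta> f0 degf[unfolded n_def] sm1])
  define g where "g = f ^ 2 + f ^ 4"
  have gval: "poly (map_poly (of_int :: int \<Rightarrow> 'a::comm_ring_1) g) x =
      poly (map_poly of_int f) x ^ 2 + poly (map_poly of_int f) x ^ 4" for x
    unfolding g_def by (simp add: hom_distribs)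
  have "poly (map_poly of_int g) \<theta> \<in> pisot_set (gen_field \<theta>)"
  proof (rule mem_pisot_set[OF irr mon p\<theta> refl])
    let ?y = "poly (map_poly (of_int :: int \<Rightarrow> real) f) \<theta>"
    have y2: "?y ^ 2 \<ge> 1" using fth by (metis abs_le_square_iff abs_one one_power2)
    have "?y ^ 4 = (?y ^ 2) ^ 2" by (simp add: power_mult[symmetric])
    moreover have "(?y ^ 2) ^ 2 \<ge> 1" by (rule one_le_power[OF y2])
    ultimately have "?y ^ 4 \<ge> 1" by simp
    then show "poly (map_poly of_int g) \<theta> > 1" using y2 by (simp add: gval)
    fix z assume z: "poly ?pc z = 0" "z \<noteq> complex_of_real \<theta>"
    then have zR: "z \<in> R" unfolding R_def Rt_def by auto
    let ?w = "poly (map_poly (of_int :: int \<Rightarrow> complex) f) z"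
    have w: "cmod ?w < 1/4" using small[OF zR] .
    have "cmod (?w ^ 2 + ?w ^ 4) \<le> cmod ?w ^ 2 + cmod ?w ^ 4"
      using norm_triangle_ineq[of "?w^2" "?w^4"] by (simp add: norm_power)
    also have "\<dots> \<le> (1/4) ^ 2 + (1/4) ^ 4"
      using w by (intro add_mono power_mono) auto
    also have "(1/4::real) ^ 2 + (1/4) ^ 4 < 1" by (simp add: power_numeral_reduce)
    finally show "cmod (poly (map_poly of_int g) z) < 1" by (simp add: gval)
  qed
  then show ?thesis by blast
qed


lemma qrc: "map_poly (of_rat :: rat \<Rightarrow> complex) P = map_poly complex_of_real (map_poly of_rat P)"
  by (subst map_poly_map_poly) (auto simp: o_def cr_rat)

lemma rat_poly_complex_of_real:
  "poly (map_poly (of_rat :: rat \<Rightarrow> complex) P) (complex_of_real x) = complex_of_real (poly (map_poly of_rat P) x)"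
  unfolding qrc by (simp add: of_real_hom.poly_map_poly)

lemma poly_prod_mset_zero_rat:
  fixes M :: "rat poly multiset"
  assumes "poly (map_poly (of_rat :: rat \<Rightarrow> complex) (prod_mset M)) z = 0"
  shows "\<exists>r\<in>#M. poly (map_poly (of_rat :: rat \<Rightarrow> complex) r) z = 0"
  using assms
proof (induction M)
  case empty then show ?case by simp
next
  case (add r M)
  then show ?case by (auto simp: hom_distribs)
qed

lemma rat_irreducible_factor:
  fixes P :: "rat poly"
  assumes P0: "P \<noteq> 0" and z: "poly (map_poly (of_rat :: rat \<Rightarrow> complex) P) z = 0"
  shows "\<exists>Q. irreducible Q \<and> poly (map_poly (of_rat :: rat \<Rightarrow> complex) Q) z = 0"
proof -
  have "normalize (prod_mset (prime_factorization P)) = normalize P"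
    using prod_mset_prime_factorization_weak[OF P0] by simp
  then have "P dvd prod_mset (prime_factorization P)" by (metis normalize_dvd_iff dvd_normalize_iff dvd_refl)
  then obtain k where k: "prod_mset (prime_factorization P) = P * k" by (elim dvdE)
  have "poly (map_poly (of_rat :: rat \<Rightarrow> complex) (prod_mset (prime_factorization P))) z = 0"
    unfolding k using z by (simp add: hom_distribs)
  then obtain r where r: "r \<in># prime_factorization P" "poly (map_poly (of_rat :: rat \<Rightarrow> complex) r) z = 0"
    using poly_prod_mset_zero_rat by blast
  have "prime r" using r(1) by (rule in_prime_factors_imp_prime)
  then have "irreducible r" using prime_elem_imp_irreducible prime_imp_prime_elem by blast
  then show ?thesis using r(2) by blast
qed

lemma finite_nat_eq: "finite {t :: nat. (of_nat t :: complex) = w}"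
proof (cases "\<exists>t0. (of_nat t0 :: complex) = w")
  case True
  then obtain t0 where t0: "(of_nat t0 :: complex) = w" by blast
  have "{t :: nat. (of_nat t :: complex) = w} \<subseteq> {t0}" using t0 by (auto simp: of_nat_eq_iff)
  then show ?thesis by (rule finite_subset) simp
next
  case False then show ?thesis by simp
qed

lemma primitive_step:
  fixes a b :: real and Pa Pb :: "rat poly"
  assumes Pa: "Pa \<noteq> 0" "poly (map_poly of_rat Pa) a = 0"
    and Pb: "Pb \<noteq> 0" "poly (map_poly of_rat Pb) b = 0"
  shows "\<exists>t::nat. a \<in> gen_field (a + of_nat t * b) \<and> b \<in> gen_field (a + of_nat t * b)"
proof -
  obtain Qb where Qb: "irreducible Qb" "poly (map_poly (of_rat :: rat \<Rightarrow> complex) Qb) (complex_of_real b) = 0"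
    using rat_irreducible_factor[OF Pb(1), of "complex_of_real b"] Pb(2)
    by (auto simp: rat_poly_complex_of_real)
  have Qb0: "Qb \<noteq> 0" using Qb(1) by auto
  define Ra where "Ra = {w. poly (map_poly (of_rat :: rat \<Rightarrow> complex) Pa) w = 0}"
  define Rb where "Rb = {w. poly (map_poly (of_rat :: rat \<Rightarrow> complex) Qb) w = 0}"
  have finRa: "finite Ra" unfolding Ra_def using Pa(1) by (intro poly_roots_finite) auto
  have finRb: "finite Rb" unfolding Rb_def using Qb0 by (intro poly_roots_finite) auto
  define Bad where "Bad = {t::nat. \<exists>ai\<in>Ra. \<exists>bj\<in>Rb. bj \<noteq> complex_of_real b \<and>
      ai + of_nat t * bj = complex_of_real a + of_nat t * complex_of_real b}"
  have "Bad \<subseteq> (\<Union>(ai, bj)\<in>Ra \<times> (Rb - {complex_of_real b}).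
        {t :: nat. (of_nat t :: complex) = (ai - complex_of_real a) / (complex_of_real b - bj)})"
  proof
    fix t assume "t \<in> Bad"
    then obtain ai bj where ab: "ai \<in> Ra" "bj \<in> Rb" "bj \<noteq> complex_of_real b"
      "ai + of_nat t * bj = complex_of_real a + of_nat t * complex_of_real b" unfolding Bad_def by blast
    have "(of_nat t :: complex) * (complex_of_real b - bj) = ai - complex_of_real a"
      using ab(4) by (simp add: algebra_simps)
    then have "(of_nat t :: complex) = (ai - complex_of_real a) / (complex_of_real b - bj)"
      using ab(3) by (simp add: field_simps)
    then show "t \<in> (\<Union>(ai, bj)\<in>Ra \<times> (Rb - {complex_of_real b}).
        {t :: nat. (of_nat t :: complex) = (ai - complex_of_real a) / (complex_of_real b - bj)})"
      using ab by blast
  qed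
  moreover have "finite (\<Union>(ai, bj)\<in>Ra \<times> (Rb - {complex_of_real b}).
        {t :: nat. (of_nat t :: complex) = (ai - complex_of_real a) / (complex_of_real b - bj)})"
    using finRa finRb by (intro finite_UN_I) (auto simp: finite_nat_eq)
  ultimately have "finite Bad" by (rule finite_subset)
  then obtain t where t: "t \<notin> Bad" using ex_new_if_finite[of Bad] by auto
  define c where "c = a + of_nat t * b"
  define F where "F = gen_field c"
  have F: "real_subfield F" unfolding F_def by (rule gen_field_subfield)
  have cF: "c \<in> F" unfolding F_def by (rule gen_field_in)
  have S: "sring F" using F by (rule sring_rsf)
  have cinrat: "cin F (map_poly real_of_rat Q)" for Q
    unfolding cin_def by (auto simp: coeff_map_poly rsf_of_rat[OF F])
  have bF: "b \<in> F"
  proof (rule gcd_root_in_field[OF F])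
    let ?P = "map_poly real_of_rat Qb"
    let ?H = "pcompose (map_poly real_of_rat Pa) [:c, - of_nat t:]"
    show "cin F ?P" by (rule cinrat)
    show "cin F ?H"
      by (intro cin_pcompose S cinrat cin_pCons cF cin_0) (use rsf_basic(5)[OF F rsf_of_nat[OF F]] in auto)
    show "?P \<noteq> 0" using Qb0 by simp
    show "poly ?P b = 0" using Qb(2) by (simp add: rat_poly_complex_of_real)
    show "poly ?H b = 0" using Pa(2) by (simp add: poly_pcompose c_def)
    show "rsquarefree (map_poly complex_of_real ?P)"
      using irreducible_rat_rsquarefree[OF Qb(1)] by (simp add: qrc)
    fix w assume w1: "poly (map_poly complex_of_real ?P) w = 0"
      and w2: "poly (map_poly complex_of_real ?H) w = 0"
    have wRb: "w \<in> Rb" using w1 unfolding Rb_def by (simp add: qrc)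
    have "map_poly complex_of_real ?H =
        pcompose (map_poly complex_of_real (map_poly real_of_rat Pa)) [:complex_of_real c, - of_nat t:]"
      by (simp add: hom_distribs)
    then have "poly (map_poly (of_rat :: rat \<Rightarrow> complex) Pa) (complex_of_real c - of_nat t * w) = 0"
      using w2 by (simp add: poly_pcompose qrc algebra_simps)
    then have ai: "complex_of_real c - of_nat t * w \<in> Ra" unfolding Ra_def by simp
    show "w = complex_of_real b"
    proof (rule ccontr)
      assume "w \<noteq> complex_of_real b"
      moreover have "(complex_of_real c - of_nat t * w) + of_nat t * w = complex_of_real a + of_nat t * complex_of_real b"
        unfolding c_def by simp
      ultimately have "t \<in> Bad" unfolding Bad_def using ai wRb by blast
      then show False using t by simp
    qed
  qed
  have "a = c - of_nat t * b" unfolding c_def by simp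
  then have aF: "a \<in> F" using rsf_diff[OF F cF rsf_basic(4)[OF F rsf_of_nat[OF F] bF]] by simp
  show ?thesis using aF bF unfolding F_def c_def by blast
qed

lemma primitive_element:
  assumes K: "real_number_field K"
  shows "\<exists>\<gamma>\<in>K. gen_field \<gamma> = K"
proof -
  have F: "real_subfield K" using K by (rule rnf_subfield)
  obtain B where B: "finite B" "B \<subseteq> K" and span: "\<And>x. x \<in> K \<Longrightarrow> \<exists>c :: real \<Rightarrow> rat. x = (\<Sum>b\<in>B. of_rat (c b) * b)"
    using K unfolding real_number_field_def by blast
  obtain N where N: "\<And>x. x \<in> K \<Longrightarrow> \<exists>P :: rat poly. lead_coeff P = 1 \<and> degree P = N \<and> poly (map_poly of_rat P) x = 0"
    using alg_bound[OF K] by blast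
  have alg: "\<exists>P :: rat poly. P \<noteq> 0 \<and> poly (map_poly of_rat P) x = 0" if "x \<in> K" for x
    using N[OF that] by (metis leading_coeff_0_iff zero_neq_one)
  have "B' \<subseteq> K \<Longrightarrow> \<exists>\<gamma>\<in>K. B' \<subseteq> gen_field \<gamma>" if "finite B'" for B'
    using that
  proof (induction B' rule: finite_induct)
    case empty then show ?case using rsf_basic(1)[OF F] by blast
  next
    case (insert b B')
    then obtain \<gamma> where g: "\<gamma> \<in> K" "B' \<subseteq> gen_field \<gamma>" by auto
    have bK: "b \<in> K" using insert.prems by auto
    obtain P1 where P1: "P1 \<noteq> 0" "poly (map_poly of_rat P1) \<gamma> = 0" using alg[OF g(1)] by blast
    obtain P2 where P2: "P2 \<noteq> 0" "poly (map_poly of_rat P2) b = 0" using alg[OF bK] by blast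
    obtain t :: nat where t: "\<gamma> \<in> gen_field (\<gamma> + of_nat t * b)" "b \<in> gen_field (\<gamma> + of_nat t * b)"
      using primitive_step[OF P1 P2] by blast
    have "gen_field \<gamma> \<subseteq> gen_field (\<gamma> + of_nat t * b)" by (rule gen_field_least[OF gen_field_subfield t(1)])
    moreover have "\<gamma> + of_nat t * b \<in> K"
      using rsf_basic(3)[OF F g(1) rsf_basic(4)[OF F rsf_of_nat[OF F] bK]] .
    ultimately show ?case using g t(2) by blast
  qed
  then obtain \<gamma> where g: "\<gamma> \<in> K" "B \<subseteq> gen_field \<gamma>" using B by blast
  have "K \<subseteq> gen_field \<gamma>"
  proof
    fix x assume "x \<in> K"
    then obtain c where c: "x = (\<Sum>b\<in>B. of_rat (c b) * b)" using span by blast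
    show "x \<in> gen_field \<gamma>" unfolding c
      by (intro rsf_sum[OF gen_field_subfield] rsf_basic(4)[OF gen_field_subfield] rsf_of_rat[OF gen_field_subfield])
        (use g in auto)
  qed
  moreover have "gen_field \<gamma> \<subseteq> K" by (rule gen_field_least[OF F g(1)])
  ultimately show ?thesis using g(1) by blast
qed


lemma common_denom_exists:
  fixes P :: "rat poly"
  shows "\<exists>D::int. D > 0 \<and> (\<forall>i. of_int D * Polynomial.coeff P i \<in> \<int>)"
proof -
  define m where "m = degree P"
  define d where "d i = snd (quotient_of (Polynomial.coeff P i))" for i
  define D where "D = (\<Prod>i\<le>m. d i)"
  have dpos: "d i > 0" for i unfolding d_def by (rule quotient_of_denom_pos') 
  have Dpos: "D > 0" unfolding D_def using dpos by (intro prod_pos) auto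
  have "of_int D * Polynomial.coeff P i \<in> \<int>" for i
  proof (cases "i \<le> m")
    case True
    obtain a where qa: "quotient_of (Polynomial.coeff P i) = (a, d i)" unfolding d_def by (metis prod.collapse)
    have ci: "Polynomial.coeff P i = of_int a / of_int (d i)" using quotient_of_div[OF qa] .
    have "D = d i * (\<Prod>j\<in>{..m} - {i}. d j)" unfolding D_def using True by (subst prod.remove[of _ i]) auto
    then have "of_int D * Polynomial.coeff P i = of_int (a * (\<Prod>j\<in>{..m} - {i}. d j))"
      unfolding ci using dpos[of i] by (simp add: field_simps)
    then show ?thesis by (metis Ints_of_int)
  next
    case False then show ?thesis unfolding m_def by (simp add: coeff_eq_0)
  qed
  then show ?thesis using Dpos by blast
qed

lemma alg_int_scaling:
  fixes P :: "rat poly" and \<gamma> :: real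
  assumes mon: "lead_coeff P = 1" and P\<gamma>: "poly (map_poly of_rat P) \<gamma> = 0"
  shows "\<exists>D::int. D > 0 \<and> (\<exists>q :: int poly. lead_coeff q = 1 \<and> poly (map_poly of_int q) (of_int D * \<gamma>) = 0)"
proof -
  obtain D :: int where D: "D > 0" "\<And>i. of_int D * Polynomial.coeff P i \<in> \<int>"
    using common_denom_exists[of P] by blast
  define m where "m = degree P"
  define e where "e i = of_int D ^ (m - i) * Polynomial.coeff P i" for i
  have eZ: "e i \<in> \<int>" if "i \<le> m" for i
  proof (cases "i = m")
    case True then show ?thesis unfolding e_def using mon m_def by simp
  next
    case False
    then have "m - i = Suc (m - i - 1)" using that by simp
    then have "e i = of_int D ^ (m - i - 1) * (of_int D * Polynomial.coeff P i)"
      unfolding e_def by (metis mult.assoc power_Suc2 mult.commute)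
    then show ?thesis using D(2)[of i] by simp
  qed
  define q :: "int poly" where "q = (\<Sum>i\<le>m. Polynomial.monom \<lfloor>e i\<rfloor> i)"
  have cq: "Polynomial.coeff q i = (if i \<le> m then \<lfloor>e i\<rfloor> else 0)" for i
    unfolding q_def by (simp add: coeff_sum coeff_monom)
  have em: "e m = 1" unfolding e_def using mon m_def by simp
  have dq: "degree q = m"
  proof (rule antisym)
    show "degree q \<le> m" by (rule degree_le) (auto simp: cq)
    show "m \<le> degree q" by (rule le_degree) (simp add: cq em)
  qed
  have lq: "lead_coeff q = 1" using dq by (simp add: cq em)
  have cqr: "real_of_int (Polynomial.coeff q i) = of_rat (e i)" if "i \<le> m" for i
  proof -
    have h: "rat_of_int \<lfloor>e i\<rfloor> = e i" using Ints_floor_eq[OF eZ[OF that]] .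
    have "real_of_int (Polynomial.coeff q i) = real_of_int \<lfloor>e i\<rfloor>" using that by (simp add: cq)
    also have "\<dots> = real_of_rat (rat_of_int \<lfloor>e i\<rfloor>)" by (rule of_rat_of_int_eq[symmetric])
    also have "\<dots> = real_of_rat (e i)" by (simp only: h)
    finally show ?thesis .
  qed
  have "poly (map_poly of_int q) (of_int D * \<gamma>) = (\<Sum>i\<le>m. real_of_int (Polynomial.coeff q i) * (of_int D * \<gamma>) ^ i)"
    by (simp add: poly_altdef degree_map_poly dq coeff_map_poly)
  also have "\<dots> = (\<Sum>i\<le>m. of_int D ^ m * (of_rat (Polynomial.coeff P i) * \<gamma> ^ i))"
  proof (intro sum.cong refl)
    fix i assume i: "i \<in> {..m}"
    then have "real_of_int (Polynomial.coeff q i) = of_int D ^ (m - i) * of_rat (Polynomial.coeff P i)"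
      using cqr[of i] unfolding e_def by (simp add: of_rat_mult of_rat_power)
    moreover have "(of_int D :: real) ^ (m - i) * of_int D ^ i = of_int D ^ m"
      using i by (simp add: power_add[symmetric])
    ultimately show "real_of_int (Polynomial.coeff q i) * (of_int D * \<gamma>) ^ i = of_int D ^ m * (of_rat (Polynomial.coeff P i) * \<gamma> ^ i)"
      by (simp add: power_mult_distrib algebra_simps)
  qed
  also have "\<dots> = of_int D ^ m * poly (map_poly of_rat P) \<gamma>"
    by (simp add: poly_altdef degree_map_poly m_def coeff_map_poly sum_distrib_left)
  also have "\<dots> = 0" using P\<gamma> by simp
  finally show ?thesis using D(1) lq by blast
qed

lemma generator_exists:
  assumes K: "real_number_field K"
  shows "\<exists>\<theta> p. irreducible p \<and> lead_coeff p = 1 \<and> poly (map_poly (of_int :: int \<Rightarrow> real) p) \<theta> = 0 \<and> gen_field \<theta> = K"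
proof -
  obtain \<gamma> where g: "\<gamma> \<in> K" "gen_field \<gamma> = K" using primitive_element[OF K] by blast
  obtain N where N: "\<And>x. x \<in> K \<Longrightarrow> \<exists>P :: rat poly. lead_coeff P = 1 \<and> degree P = N \<and> poly (map_poly of_rat P) x = 0"
    using alg_bound[OF K] by blast
  obtain P :: "rat poly" where P: "lead_coeff P = 1" "poly (map_poly of_rat P) \<gamma> = 0" using N[OF g(1)] by blast
  obtain D :: int and q :: "int poly" where Dq: "D > 0" "lead_coeff q = 1" "poly (map_poly of_int q) (of_int D * \<gamma>) = 0"
    using alg_int_scaling[OF P] by blast
  define \<theta> where "\<theta> = of_int D * \<gamma>"
  obtain p where p: "irreducible p" "lead_coeff p = 1"
    "poly (map_poly (of_int :: int \<Rightarrow> complex) p) (complex_of_real \<theta>) = 0"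
    using monic_irreducible_factor[OF Dq(2), of "complex_of_real \<theta>"] real_root_complex[OF Dq(3)]
    unfolding \<theta>_def by blast
  have p\<theta>: "poly (map_poly (of_int :: int \<Rightarrow> real) p) \<theta> = 0" using p(3) by (simp add: ipoly_complex_of_real)
  have "\<theta> \<in> gen_field \<gamma>" unfolding \<theta>_def
    by (intro rsf_basic(4)[OF gen_field_subfield] rsf_of_int[OF gen_field_subfield] gen_field_in)
  then have s1: "gen_field \<theta> \<subseteq> gen_field \<gamma>" by (rule gen_field_least[OF gen_field_subfield])
  have "\<gamma> = \<theta> / of_int D" unfolding \<theta>_def using Dq(1) by simp
  then have "\<gamma> \<in> gen_field \<theta>"
    using rsf_divide[OF gen_field_subfield gen_field_in rsf_of_int[OF gen_field_subfield]] by metis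
  then have "gen_field \<gamma> \<subseteq> gen_field \<theta>" by (rule gen_field_least[OF gen_field_subfield])
  then have "gen_field \<theta> = K" using s1 g(2) by blast
  then show ?thesis using p(1,2) p\<theta> by blast
qed

lemma pisot_set_nonempty:
  assumes K: "real_number_field K"
  shows "\<exists>\<theta>. \<theta> \<in> pisot_set K"
proof -
  obtain \<theta> p where "irreducible p" "lead_coeff p = 1" "poly (map_poly (of_int :: int \<Rightarrow> real) p) \<theta> = 0" "gen_field \<theta> = K"
    using generator_exists[OF K] by blast
  then show ?thesis using pisot_exists_from_generator by metis
qed

theorem theorem1p1:
  fixes K :: "real set"
  assumes "real_number_field K"
  shows "1 \<in> diff_set K \<and>
         pisot_set K \<subset> diff_set K \<and>
         (K \<noteq> \<rat> \<longrightarrow> infinite (diff_set K - pisot_set K) \<and>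
           (\<exists>a\<in>gap_set K. \<exists>b\<in>gap_set K. a \<noteq> b))"
proof -
  have K: "real_number_field K" by (rule assms)
  obtain \<theta>0 where th0: "\<theta>0 \<in> pisot_set K" using pisot_set_nonempty[OF K] by blast
  have main: "1 \<in> diff_set K \<and> (K \<noteq> \<rat> \<longrightarrow> (\<forall>Y. \<exists>d \<in> diff_set K - pisot_set K. d > Y))"
    by (rule one_in_diff_and_more[OF th0])
  have one: "1 \<in> diff_set K" using main by blast
  have sub: "pisot_set K \<subseteq> diff_set K" using pisot_in_diff by blast
  have "1 \<notin> pisot_set K" unfolding pisot_set_def pisot_def by simp
  then have psub: "pisot_set K \<subset> diff_set K" using sub one by blast
  have third: "infinite (diff_set K - pisot_set K) \<and> (\<exists>a\<in>gap_set K. \<exists>b\<in>gap_set K. a \<noteq> b)"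
    if KQ: "K \<noteq> \<rat>"
  proof
    have unb: "\<forall>Y. \<exists>d \<in> diff_set K - pisot_set K. d > Y" using main KQ by blast
    show "infinite (diff_set K - pisot_set K)"
    proof
      assume fin: "finite (diff_set K - pisot_set K)"
      define Y where "Y = Max (insert 0 (diff_set K - pisot_set K))"
      have "\<forall>x\<in>diff_set K - pisot_set K. x \<le> Y" unfolding Y_def using fin by simp
      then show False using unb by (meson not_le)
    qed
    show "\<exists>a\<in>gap_set K. \<exists>b\<in>gap_set K. a \<noteq> b"
      by (rule two_gaps[OF K KQ one th0 pisot_in_diff[OF th0]])
  qed
  show ?thesis using one psub third by blast
qed


end
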